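(* Linear $\mathrm{HTA}_\pm$ are strictly less expressive than two-way linear $\mathrm{HTA}_\pm$: every set of $\Sigma$-trees recognised by a linear $\mathrm{HTA}_\pm$ is recognised by some two-way linear $\mathrm{HTA}_\pm$, but some set of $\Sigma$-trees recognised by a two-way linear $\mathrm{HTA}_\pm$ is not recognised by any linear $\mathrm{HTA}_\pm$.
   Context: Fix a finite set $AP$, $\Sigma=2^{AP}$; $\Sigma$-trees are unranked (finitely many children per node), unordered, leafless trees labelled by $\Sigma$. A two-way $\mathrm{HTA}_\pm$ is $\langle Q,\Sigma,\delta,q_I,F\rangle$, $Q$ finite, $q_I\in Q$, $F\subseteq Q$, $\delta:Q\times\Sigma\times\{\mathit{root},\mathit{nonroot}\}\to\mathcal{B}^+(\{\Diamond_k,\Box_k\}_{k\in\mathbb{N}}\times Q\cup\{\Uparrow\}\times Q)$ (positive Boolean formulae built with $\top,\bot,\land,\lor$; $\Diamond=\Diamond_1,\Box=\Box_1$). A run on $t$ from $s$: tree $r$ labelled in $Q\times\mathrm{Dom}(t)$ with root $(q_I,s)$, each node $x$ labelled $(q,v)$ satisfying $\delta(q,t(v),\rho)$ ($\rho=\mathit{root}$ iff $v$ is the root), where $x\models(\Diamond_k,q')$ iff $x$ has children labelled $(q',v_i)$ for $k$ pairwise distinct children $v_i$ of $v$; $x\models(\Box_k,q')$ iff for all but at most $k-1$ children $v'$ of $v$ some child of $x$ is labelled $(q',v')$; $x\models(\Uparrow,q')$ iff some child of $x$ is labelled $(q',v')$ with $v'$ the parent of $v$. Accepting: every infinite path of $r$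 from its root visits $F$ infinitely often. Recognised language: trees with an accepting run from the root. Hesitant: $Q$ partitioned into totally ordered nonempty components such that transitions from $Q_i$ mention only states in components $Q_j$, $j\le i$, each component being transient (no $Q_i$-atoms in transitions of its states), existential ($Q_i$-atoms only of form $(\Diamond,q')$, at most one per DNF clause), universal (only $(\Box,q')$, at most one per CNF clause), or upward (a singleton $\{q\}$ where $q$ occurs in its own transitions only as $(\Uparrow,q)$). Polarised: existential-component states not in $F$, universal-component states in $F$. Linear: all components are singletons. A (one-way) linear $\mathrm{HTA}_\pm$ is the special case with no atoms $(\Uparrow,q)$ and with $\delta$ not depending on the $\mathit{root}/\mathit{nonroot}$ argument (equivalently $\delta:Q\times\Sigma\to\mathcal{B}^+(\{\Diamond_k,\Box_k\}_{k\in\mathbb{N}}\times Q)$), with components of types transient, existential or universal only. *)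

theory Defs
  imports Main
begin

datatype 'q hatom = Dia nat 'q | Box nat 'q | Up 'q

fun atom_state :: "'q hatom \<Rightarrow> 'q" where
  "atom_state (Dia k q) = q"
| "atom_state (Box k q) = q"
| "atom_state (Up q) = q"

fun is_up :: "'q hatom \<Rightarrow> bool" where
  "is_up (Up q) = True"
| "is_up _ = False"

datatype 'a pbf = PTrue | PFalse | PAtom 'a | PAnd "'a pbf" "'a pbf" | POr "'a pbf" "'a pbf"

fun pbf_atoms :: "'a pbf \<Rightarrow> 'a set" where
  "pbf_atoms PTrue = {}"
| "pbf_atoms PFalse = {}"
| "pbf_atoms (PAtom a) = {a}"
| "pbf_atoms (PAnd f g) = pbf_atoms f \<union> pbf_atoms g"
| "pbf_atoms (POr f g) = pbf_atoms f \<union> pbf_atoms g"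

fun pbf_sat :: "('a \<Rightarrow> bool) \<Rightarrow> 'a pbf \<Rightarrow> bool" where
  "pbf_sat I PTrue = True"
| "pbf_sat I PFalse = False"
| "pbf_sat I (PAtom a) = I a"
| "pbf_sat I (PAnd f g) = (pbf_sat I f \<and> pbf_sat I g)"
| "pbf_sat I (POr f g) = (pbf_sat I f \<or> pbf_sat I g)"

fun dnf :: "'a pbf \<Rightarrow> 'a list list" where
  "dnf PTrue = [[]]"
| "dnf PFalse = []"
| "dnf (PAtom a) = [[a]]"
| "dnf (POr f g) = dnf f @ dnf g"
| "dnf (PAnd f g) = [c @ d. c \<leftarrow> dnf f, d \<leftarrow> dnf g]"

fun cnf :: "'a pbf \<Rightarrow> 'a list list" where
  "cnf PTrue = []"
| "cnf PFalse = [[]]"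
| "cnf (PAtom a) = [[a]]"
| "cnf (PAnd f g) = cnf f @ cnf g"
| "cnf (POr f g) = [c @ d. c \<leftarrow> cnf f, d \<leftarrow> cnf g]"

text \<open>A tree has domain a set of nat lists (root = []), labels in 2^AP = 'ap set.\<close>
record 'ap tree =
  tdom :: "nat list set"
  tlab :: "nat list \<Rightarrow> 'ap set"

definition children :: "nat list set \<Rightarrow> nat list \<Rightarrow> nat list set" where
  "children D v = {w. w \<in> D \<and> (\<exists>i. w = v @ [i])}"

text \<open>Unranked (finitely many children), leafless trees; canonical representation.\<close>
definition is_tree :: "'ap tree \<Rightarrow> bool" where
  "is_tree t \<longleftrightarrow>
     [] \<in> tdom t \<and>
     (\<forall>v i. v @ [i] \<in> tdom t \<longrightarrow> v \<in> tdom t) \<and>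
     (\<forall>v \<in> tdom t. \<exists>n > 0. \<forall>i. v @ [i] \<in> tdom t \<longleftrightarrow> i < n) \<and>
     (\<forall>v. v \<notin> tdom t \<longrightarrow> tlab t v = {})"

record 'ap hta =
  hstates :: "nat set"
  hdelta :: "nat \<Rightarrow> 'ap set \<Rightarrow> bool \<Rightarrow> nat hatom pbf"  \<comment> \<open>bool: True iff root\<close>
  hinit :: nat
  hacc :: "nat set"

text \<open>Satisfaction of an atom at a run node reading tree node v, where M is the set of
  labels of the run node's children.\<close>
fun sat_atom :: "'ap tree \<Rightarrow> nat list \<Rightarrow> (nat \<times> nat list) set \<Rightarrow> nat hatom \<Rightarrow> bool" where
  "sat_atom t v M (Dia k q') =
     (\<exists>S \<subseteq> children (tdom t) v. finite S \<and> card S = k \<and> (\<forall>w \<in> S. (q', w) \<in> M))"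
| "sat_atom t v M (Box k q') =
     (card {w \<in> children (tdom t) v. (q', w) \<notin> M} < k)"
| "sat_atom t v M (Up q') = (v \<noteq> [] \<and> (q', butlast v) \<in> M)"

definition accepting_run ::
  "'ap hta \<Rightarrow> 'ap tree \<Rightarrow> nat list \<Rightarrow> nat list set \<Rightarrow> (nat list \<Rightarrow> nat \<times> nat list) \<Rightarrow> bool" where
  "accepting_run A t s R \<rho> \<longleftrightarrow>
     [] \<in> R \<and> (\<forall>x i. x @ [i] \<in> R \<longrightarrow> x \<in> R) \<and>
     \<rho> [] = (hinit A, s) \<and>
     (\<forall>x \<in> R. fst (\<rho> x) \<in> hstates A \<and> snd (\<rho> x) \<in> tdom t \<and>
        pbf_sat (sat_atom t (snd (\<rho> x)) (\<rho> ` children R x))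
          (hdelta A (fst (\<rho> x)) (tlab t (snd (\<rho> x))) (snd (\<rho> x) = []))) \<and>
     (\<forall>\<pi>. \<pi> 0 = [] \<and> (\<forall>n. \<pi> (Suc n) \<in> children R (\<pi> n)) \<longrightarrow>
        (\<exists>\<^sub>\<infinity>n. fst (\<rho> (\<pi> n)) \<in> hacc A))"

definition lang :: "'ap hta \<Rightarrow> 'ap tree set" where
  "lang A = {t. is_tree t \<and> (\<exists>R \<rho>. accepting_run A t [] R \<rho>)}"

definition hta_wf :: "'ap hta \<Rightarrow> bool" where
  "hta_wf A \<longleftrightarrow> finite (hstates A) \<and> hinit A \<in> hstates A \<and> hacc A \<subseteq> hstates A \<and>
     (\<forall>q \<in> hstates A. \<forall>\<sigma> b. atom_state ` pbf_atoms (hdelta A q \<sigma> b) \<subseteq> hstates A)"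

text \<open>Singleton components, totally ordered by an injective rank; transitions only go down.\<close>
definition linear_order_ok :: "'ap hta \<Rightarrow> bool" where
  "linear_order_ok A \<longleftrightarrow> (\<exists>rk :: nat \<Rightarrow> nat. inj_on rk (hstates A) \<and>
     (\<forall>q \<in> hstates A. \<forall>\<sigma> b. \<forall>a \<in> pbf_atoms (hdelta A q \<sigma> b). rk (atom_state a) \<le> rk q))"

definition occ :: "nat \<Rightarrow> nat hatom pbf \<Rightarrow> nat hatom set" where
  "occ q f = {a \<in> pbf_atoms f. atom_state a = q}"

definition transient_st :: "'ap hta \<Rightarrow> nat \<Rightarrow> bool" where
  "transient_st A q \<longleftrightarrow> (\<forall>\<sigma> b. occ q (hdelta A q \<sigma> b) = {})"

definition existential_st :: "'ap hta \<Rightarrow> nat \<Rightarrow> bool" where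
  "existential_st A q \<longleftrightarrow> (\<forall>\<sigma> b. occ q (hdelta A q \<sigma> b) \<subseteq> {Dia 1 q} \<and>
     (\<forall>c \<in> set (dnf (hdelta A q \<sigma> b)). length (filter (\<lambda>a. atom_state a = q) c) \<le> 1))"

definition universal_st :: "'ap hta \<Rightarrow> nat \<Rightarrow> bool" where
  "universal_st A q \<longleftrightarrow> (\<forall>\<sigma> b. occ q (hdelta A q \<sigma> b) \<subseteq> {Box 1 q} \<and>
     (\<forall>c \<in> set (cnf (hdelta A q \<sigma> b)). length (filter (\<lambda>a. atom_state a = q) c) \<le> 1))"

definition upward_st :: "'ap hta \<Rightarrow> nat \<Rightarrow> bool" where
  "upward_st A q \<longleftrightarrow> (\<forall>\<sigma> b. occ q (hdelta A q \<sigma> b) \<subseteq> {Up q})"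

text \<open>Two-way linear HTA_pm: hesitant, polarised, all components singletons.\<close>
definition two_way_linear :: "'ap hta \<Rightarrow> bool" where
  "two_way_linear A \<longleftrightarrow> hta_wf A \<and> linear_order_ok A \<and>
     (\<forall>q \<in> hstates A. transient_st A q \<or> (existential_st A q \<and> q \<notin> hacc A) \<or>
        (universal_st A q \<and> q \<in> hacc A) \<or> upward_st A q)"

definition one_way_linear :: "'ap hta \<Rightarrow> bool" where
  "one_way_linear A \<longleftrightarrow> hta_wf A \<and> linear_order_ok A \<and>
     (\<forall>q \<in> hstates A. \<forall>\<sigma>. hdelta A q \<sigma> True = hdelta A q \<sigma> False) \<and>
     (\<forall>q \<in> hstates A. \<forall>\<sigma> b. \<forall>a \<in> pbf_atoms (hdelta A q \<sigma> b). \<not> is_up a) \<and>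
     (\<forall>q \<in> hstates A. transient_st A q \<or> (existential_st A q \<and> q \<notin> hacc A) \<or>
        (universal_st A q \<and> q \<in> hacc A))"

end

theory Submission
  imports Defs "HOL-Library.Nat_Bijection" "HOL-Library.Infinite_Set"
begin

datatype kd = Mid bool bool nat | Dead bool

fun kchild :: "kd \<Rightarrow> nat \<Rightarrow> kd" where
  "kchild (Mid x s (Suc j)) i = (if i = 0 then Mid x (\<not> s) j else if i = 1 then Mid False (\<not> s) j
      else if i = 2 then Mid True s j else Mid False s j)"
| "kchild (Mid x s 0) i = Dead s"
| "kchild (Dead s) i = Dead s"

fun kdeg :: "kd \<Rightarrow> nat" where
  "kdeg (Mid x s j) = (if x \<and> j = 0 then 5 else 4)"
| "kdeg (Dead s) = 4"

fun klab :: "kd \<Rightarrow> bool" where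
  "klab (Mid x s j) = s"
| "klab (Dead s) = s"

definition labS :: "bool \<Rightarrow> 'ap set" where
  "labS s = (if s then UNIV else {})"

fun kvalid :: "kd \<Rightarrow> nat list \<Rightarrow> bool" where
  "kvalid k [] = True"
| "kvalid k (i # v) = (i < kdeg k \<and> kvalid (kchild k i) v)"

fun kat :: "kd \<Rightarrow> nat list \<Rightarrow> kd" where
  "kat k [] = k"
| "kat k (i # v) = kat (kchild k i) v"

definition tree_of :: "kd \<Rightarrow> 'ap tree" where
  "tree_of k = \<lparr>tdom = {v. kvalid k v}, tlab = (\<lambda>v. if kvalid k v then labS (klab (kat k v)) else {})\<rparr>"

lemma kdeg_pos: "0 < kdeg k"
  by (cases k) auto

lemma kvalid_append: "kvalid k (v @ u) = (kvalid k v \<and> kvalid (kat k v) u)"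
  by (induction v arbitrary: k) auto

lemma kat_append: "kat k (v @ u) = kat (kat k v) u"
  by (induction v arbitrary: k) auto

lemma kvalid_snoc: "kvalid k (v @ [i]) = (kvalid k v \<and> i < kdeg (kat k v))"
  by (simp add: kvalid_append)

lemma tdom_tree_of[simp]: "tdom (tree_of k) = {v. kvalid k v}"
  by (simp add: tree_of_def)

lemma tlab_tree_of: "kvalid k v \<Longrightarrow> tlab (tree_of k) v = labS (klab (kat k v))"
  by (simp add: tree_of_def)

lemma tlab_tree_of_shift: "kvalid k (v @ u) \<Longrightarrow> tlab (tree_of k) (v @ u) = tlab (tree_of (kat k v)) u"
  by (simp add: tree_of_def kvalid_append kat_append)

lemma is_tree_tree_of: "is_tree (tree_of k)"
  unfolding is_tree_def
  apply (intro conjI)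
     apply simp
    apply (simp add: kvalid_snoc)
   apply (auto simp: kvalid_snoc intro!: exI[of _ "kdeg (kat k _)"] kdeg_pos)[1]
  apply (simp add: tree_of_def)
  done

lemma children_tree_of:
  assumes "kvalid k v"
  shows "children (tdom (tree_of k)) v = (\<lambda>i. v @ [i]) ` {..<kdeg (kat k v)}"
  using assms by (auto simp: children_def kvalid_snoc)

lemma children_tree_of_shift:
  assumes "kvalid k v"
  shows "children (tdom (tree_of k)) (v @ u) = (\<lambda>z. v @ z) ` children (tdom (tree_of (kat k v))) u"
  using assms by (auto simp: children_def kvalid_append kat_append)

lemma pbf_mono: "pbf_sat I f \<Longrightarrow> (\<And>a. a \<in> pbf_atoms f \<Longrightarrow> I a \<Longrightarrow> J a) \<Longrightarrow> pbf_sat J f"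
  by (induction f) auto

lemma pbf_cong: "(\<And>a. a \<in> pbf_atoms f \<Longrightarrow> I a = J a) \<Longrightarrow> pbf_sat I f = pbf_sat J f"
  by (induction f) auto

lemma sat_shift:
  assumes "kvalid k v" "\<not> is_up a"
    and MM: "\<And>q z. z \<in> children {z. kvalid (kat k v) z} u \<Longrightarrow> ((q, v @ z) \<in> M \<longleftrightarrow> (q, z) \<in> M')"
  shows "sat_atom (tree_of k) (v @ u) M a = sat_atom (tree_of (kat k v)) u M' a"
proof (cases a)
  case (Dia n q)
  let ?C = "children {z. kvalid (kat k v) z} u"
  have ch: "children {z. kvalid k z} (v @ u) = (\<lambda>z. v @ z) ` ?C"
    using children_tree_of_shift[OF assms(1)] by simp
  have inj: "inj_on (\<lambda>z. v @ z) X" for X by (auto simp: inj_on_def)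
  show ?thesis
  proof
    assume "sat_atom (tree_of k) (v @ u) M a"
    then obtain S where S: "S \<subseteq> (\<lambda>z. v @ z) ` ?C" "finite S" "card S = n" "\<forall>w\<in>S. (q, w) \<in> M"
      using Dia ch by auto
    then obtain S' where S': "S' \<subseteq> ?C" "S = (\<lambda>z. v @ z) ` S'" by (auto simp: subset_image_iff)
    have "finite S'" using S(2) S'(2) finite_image_iff[OF inj] by auto
    moreover have "card S' = n" using S(3) S'(2) card_image[OF inj] by auto
    moreover have "\<forall>z\<in>S'. (q, z) \<in> M'" using S(4) S' MM by auto
    ultimately show "sat_atom (tree_of (kat k v)) u M' a" using Dia S'(1) by auto
  next
    assume "sat_atom (tree_of (kat k v)) u M' a"
    then obtain S' where S': "S' \<subseteq> ?C" "finite S'" "card S' = n" "\<forall>z\<in>S'. (q, z) \<in> M'"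
      using Dia by auto
    let ?S = "(\<lambda>z. v @ z) ` S'"
    have "?S \<subseteq> children {z. kvalid k z} (v @ u)" using S'(1) ch by auto
    moreover have "card ?S = n" using S'(3) card_image[OF inj] by auto
    moreover have "\<forall>w\<in>?S. (q, w) \<in> M" using S'(1,4) MM by auto
    ultimately show "sat_atom (tree_of k) (v @ u) M a" using Dia S'(2) by (auto intro!: exI[of _ ?S])
  qed
next
  case (Box n q)
  let ?C = "children {z. kvalid (kat k v) z} u"
  have ch: "children {z. kvalid k z} (v @ u) = (\<lambda>z. v @ z) ` ?C"
    using children_tree_of_shift[OF assms(1)] by simp
  have inj: "inj_on (\<lambda>z. v @ z) X" for X by (auto simp: inj_on_def)
  have "{w \<in> children {z. kvalid k z} (v @ u). (q, w) \<notin> M} = (\<lambda>z. v @ z) ` {z \<in> ?C. (q, z) \<notin> M'}"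
    using ch MM by auto
  then show ?thesis using Box card_image[OF inj] by simp
next
  case (Up q)
  then show ?thesis using assms(2) by simp
qed

definition Acc :: "'ap hta \<Rightarrow> nat \<Rightarrow> kd \<Rightarrow> bool" where
  "Acc A q k = (\<exists>R \<rho>. accepting_run (A\<lparr>hinit := q\<rparr>) (tree_of k) [] R \<rho>)"

definition ow :: "'ap hta \<Rightarrow> bool" where
  "ow A \<longleftrightarrow> (\<forall>q \<in> hstates A. \<forall>\<sigma>. hdelta A q \<sigma> True = hdelta A q \<sigma> False) \<and>
     (\<forall>q \<in> hstates A. \<forall>\<sigma> b. \<forall>a \<in> pbf_atoms (hdelta A q \<sigma> b). \<not> is_up a)"

lemma INFM_shift: "(\<exists>\<^sub>\<infinity>n. P (n + c)) \<longleftrightarrow> (\<exists>\<^sub>\<infinity>n::nat. P n)"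
proof
  assume "\<exists>\<^sub>\<infinity>n. P (n + c)"
  then show "\<exists>\<^sub>\<infinity>n::nat. P n" unfolding INFM_nat
    by (metis add.commute trans_less_add2)
next
  assume "\<exists>\<^sub>\<infinity>n::nat. P n"
  then have *: "\<forall>m. \<exists>n>m. P n" unfolding INFM_nat .
  show "\<exists>\<^sub>\<infinity>n. P (n + c)" unfolding INFM_nat
  proof
    fix m
    obtain n where "n > m + c" "P n" using * by blast
    then show "\<exists>n>m. P (n + c)" by (intro exI[of _ "n - c"]) auto
  qed
qed

lemma run_prefix: "(\<forall>x i. x @ [i] \<in> R \<longrightarrow> x \<in> R) \<Longrightarrow> y @ z \<in> R \<Longrightarrow> y \<in> R"
  by (induction z rule: rev_induct) (auto simp flip: append_assoc)

lemma sub_run: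
  fixes A :: "'ap hta"
  assumes ow: "ow A" and run: "accepting_run (A\<lparr>hinit := q0\<rparr>) (tree_of k) [] R \<rho>"
    and xR: "x \<in> R" and xr: "\<rho> x = (p, v)"
  shows "Acc A p (kat k v)"
proof -
  have R0: "[] \<in> R" and Rpre: "\<forall>x i. x @ [i] \<in> R \<longrightarrow> x \<in> R"
    and Rloc: "\<forall>y \<in> R. fst (\<rho> y) \<in> hstates A \<and> snd (\<rho> y) \<in> tdom (tree_of k :: 'ap tree) \<and>
        pbf_sat (sat_atom (tree_of k :: 'ap tree) (snd (\<rho> y)) (\<rho> ` children R y))
          (hdelta A (fst (\<rho> y)) (tlab (tree_of k :: 'ap tree) (snd (\<rho> y))) (snd (\<rho> y) = []))"
    and Racc: "\<forall>\<pi>. \<pi> 0 = [] \<and> (\<forall>n. \<pi> (Suc n) \<in> children R (\<pi> n)) \<longrightarrow>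
        (\<exists>\<^sub>\<infinity>n. fst (\<rho> (\<pi> n)) \<in> hacc A)"
    using run unfolding accepting_run_def by (simp_all del: tdom_tree_of)
  have vv: "kvalid k v" using Rloc xR xr by force
  define R' where "R' = {w. x @ w \<in> R \<and> (\<forall>n<length w. snd (\<rho> (x @ take (Suc n) w)) \<in>
      children {z. kvalid k z} (snd (\<rho> (x @ take n w))))}"
  define \<rho>' where "\<rho>' w = (fst (\<rho> (x @ w)), drop (length v) (snd (\<rho> (x @ w))))" for w
  have R'pre: "w \<in> R'" if "w @ [i] \<in> R'" for w i
  proof -
    have "x @ w \<in> R" using that Rpre unfolding R'_def by (metis (no_types, lifting) append_assoc mem_Collect_eq)
    moreover have "\<forall>n<length w. snd (\<rho> (x @ take (Suc n) w)) \<in> children {z. kvalid k z} (snd (\<rho> (x @ take n w)))"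
    proof (intro allI impI)
      fix n assume "n < length w"
      then have "n < length (w @ [i])" "take (Suc n) (w @ [i]) = take (Suc n) w" "take n (w @ [i]) = take n w"
        by auto
      then show "snd (\<rho> (x @ take (Suc n) w)) \<in> children {z. kvalid k z} (snd (\<rho> (x @ take n w)))"
        using that unfolding R'_def by (metis (no_types, lifting) mem_Collect_eq)
    qed
    ultimately show ?thesis unfolding R'_def by auto
  qed
  have R'snoc: "w @ [i] \<in> R' \<longleftrightarrow> w \<in> R' \<and> x @ w @ [i] \<in> R \<and> snd (\<rho> (x @ w @ [i])) \<in> children {z. kvalid k z} (snd (\<rho> (x @ w)))" for w i
  proof
    assume a: "w @ [i] \<in> R'"
    then have "w \<in> R'" using R'pre by blast
    moreover have "x @ w @ [i] \<in> R" using a unfolding R'_def by auto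
    moreover have "snd (\<rho> (x @ w @ [i])) \<in> children {z. kvalid k z} (snd (\<rho> (x @ w)))"
      using a unfolding R'_def by (auto dest!: spec[of _ "length w"])
    ultimately show "w \<in> R' \<and> x @ w @ [i] \<in> R \<and> snd (\<rho> (x @ w @ [i])) \<in> children {z. kvalid k z} (snd (\<rho> (x @ w)))" by blast
  next
    assume a: "w \<in> R' \<and> x @ w @ [i] \<in> R \<and> snd (\<rho> (x @ w @ [i])) \<in> children {z. kvalid k z} (snd (\<rho> (x @ w)))"
    show "w @ [i] \<in> R'" unfolding R'_def
    proof (intro CollectI conjI allI impI)
      show "x @ w @ [i] \<in> R" using a by blast
    next
      fix n assume n: "n < length (w @ [i])"
      show "snd (\<rho> (x @ take (Suc n) (w @ [i]))) \<in> children {z. kvalid k z} (snd (\<rho> (x @ take n (w @ [i]))))"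
      proof (cases "n < length w")
        case True
        then have "take (Suc n) (w @ [i]) = take (Suc n) w" "take n (w @ [i]) = take n w" by auto
        then show ?thesis using a True unfolding R'_def by auto
      next
        case False
        then have "n = length w" using n by auto
        then show ?thesis using a by auto
      qed
    qed
  qed
  have F1: "\<exists>u. snd (\<rho> (x @ w)) = v @ u" if "w \<in> R'" for w
    using that
  proof (induction w rule: rev_induct)
    case Nil
    then show ?case using xr by auto
  next
    case (snoc i w)
    then have "w \<in> R'" and c: "snd (\<rho> (x @ w @ [i])) \<in> children {z. kvalid k z} (snd (\<rho> (x @ w)))"
      using R'snoc by auto
    then obtain u where "snd (\<rho> (x @ w)) = v @ u" using snoc by auto
    then show ?case using c unfolding children_def by auto
  qed
  have F2: "snd (\<rho> (x @ w)) = v @ snd (\<rho>' w)" if "w \<in> R'" for w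
    using F1[OF that] unfolding \<rho>'_def by auto
  have nR: "x @ w \<in> R" if "w \<in> R'" for w using that unfolding R'_def by auto
  show ?thesis unfolding Acc_def accepting_run_def
  proof (intro exI[of _ R'] exI[of _ \<rho>'] conjI)
    show "[] \<in> R'" unfolding R'_def using xR by auto
    show "\<forall>x i. x @ [i] \<in> R' \<longrightarrow> x \<in> R'" using R'pre by blast
    show "\<rho>' [] = (hinit (A\<lparr>hinit := p\<rparr>), [])" unfolding \<rho>'_def using xr by auto
  next
    show "\<forall>w\<in>R'. fst (\<rho>' w) \<in> hstates (A\<lparr>hinit := p\<rparr>) \<and> snd (\<rho>' w) \<in> tdom (tree_of (kat k v) :: 'ap tree) \<and>
        pbf_sat (sat_atom (tree_of (kat k v) :: 'ap tree) (snd (\<rho>' w)) (\<rho>' ` children R' w))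
         (hdelta (A\<lparr>hinit := p\<rparr>) (fst (\<rho>' w)) (tlab (tree_of (kat k v) :: 'ap tree) (snd (\<rho>' w))) (snd (\<rho>' w) = []))"
    proof
      fix w assume wR: "w \<in> R'"
      define u where "u = snd (\<rho>' w)"
      define p1 where "p1 = fst (\<rho> (x @ w))"
      have pos: "snd (\<rho> (x @ w)) = v @ u" using F2[OF wR] u_def by simp
      have loc: "p1 \<in> hstates A" "kvalid k (v @ u)"
        "pbf_sat (sat_atom (tree_of k :: 'ap tree) (v @ u) (\<rho> ` children R (x @ w)))
          (hdelta A p1 (tlab (tree_of k :: 'ap tree) (v @ u)) (v @ u = []))"
        using Rloc nR[OF wR] pos p1_def by auto
      have fp: "fst (\<rho>' w) = p1" unfolding \<rho>'_def p1_def by simp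
      have uv: "kvalid (kat k v) u" using loc(2) kvalid_append by auto
      have lab: "tlab (tree_of k :: 'ap tree) (v @ u) = tlab (tree_of (kat k v) :: 'ap tree) u"
        using tlab_tree_of_shift[OF loc(2)] .
      have flag: "hdelta A p1 \<sigma> b = hdelta A p1 \<sigma> b'" for \<sigma> b b'
        using ow loc(1) unfolding ow_def by (metis (full_types))
      have noup: "\<not> is_up a" if "a \<in> pbf_atoms (hdelta A p1 \<sigma> b)" for a \<sigma> b
        using ow loc(1) that unfolding ow_def by blast
      have MM: "(q, v @ z) \<in> \<rho> ` children R (x @ w) \<longleftrightarrow> (q, z) \<in> \<rho>' ` children R' w"
        if zc: "z \<in> children {z. kvalid (kat k v) z} u" for q z
      proof
        assume "(q, v @ z) \<in> \<rho> ` children R (x @ w)"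
        then obtain y where y: "y \<in> children R (x @ w)" "\<rho> y = (q, v @ z)" by auto
        then obtain i where yi: "y = x @ w @ [i]" "y \<in> R" unfolding children_def by auto
        obtain j where zj: "z = u @ [j]" using zc unfolding children_def by auto
        have "kvalid k (v @ z)" using zc uv loc(2) unfolding children_def by (auto simp: kvalid_append)
        then have "snd (\<rho> (x @ w @ [i])) \<in> children {z. kvalid k z} (snd (\<rho> (x @ w)))"
          using y yi pos zj unfolding children_def by auto
        then have wi: "w @ [i] \<in> R'" using R'snoc wR yi by auto
        then have "\<rho>' (w @ [i]) = (q, z)" unfolding \<rho>'_def using y yi by auto
        moreover have "w @ [i] \<in> children R' w" using wi unfolding children_def by auto
        ultimately show "(q, z) \<in> \<rho>' ` children R' w" by (metis image_eqI)
      next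
        assume "(q, z) \<in> \<rho>' ` children R' w"
        then obtain w' where w': "w' \<in> children R' w" "\<rho>' w' = (q, z)" by auto
        then obtain i where wi: "w' = w @ [i]" "w @ [i] \<in> R'" unfolding children_def by auto
        have "\<rho> (x @ w @ [i]) = (q, v @ z)"
          using F2[OF wi(2)] w' wi unfolding \<rho>'_def by (metis append_assoc prod.collapse prod.inject)
        moreover have "x @ w @ [i] \<in> children R (x @ w)" using nR[OF wi(2)] unfolding children_def by auto
        ultimately show "(q, v @ z) \<in> \<rho> ` children R (x @ w)" by (metis image_eqI)
      qed
      have "pbf_sat (sat_atom (tree_of (kat k v) :: 'ap tree) u (\<rho>' ` children R' w))
          (hdelta A p1 (tlab (tree_of (kat k v) :: 'ap tree) u) (u = []))"
      proof (rule pbf_mono)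
        show "pbf_sat (sat_atom (tree_of k :: 'ap tree) (v @ u) (\<rho> ` children R (x @ w)))
          (hdelta A p1 (tlab (tree_of (kat k v) :: 'ap tree) u) (u = []))"
          using loc(3) lab flag by metis
      next
        fix a assume "a \<in> pbf_atoms (hdelta A p1 (tlab (tree_of (kat k v) :: 'ap tree) u) (u = []))"
          "sat_atom (tree_of k :: 'ap tree) (v @ u) (\<rho> ` children R (x @ w)) a"
        then show "sat_atom (tree_of (kat k v) :: 'ap tree) u (\<rho>' ` children R' w) a"
          using sat_shift[OF vv noup MM] by blast
      qed
      then show "fst (\<rho>' w) \<in> hstates (A\<lparr>hinit := p\<rparr>) \<and> snd (\<rho>' w) \<in> tdom (tree_of (kat k v) :: 'ap tree) \<and>
        pbf_sat (sat_atom (tree_of (kat k v) :: 'ap tree) (snd (\<rho>' w)) (\<rho>' ` children R' w))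
         (hdelta (A\<lparr>hinit := p\<rparr>) (fst (\<rho>' w)) (tlab (tree_of (kat k v) :: 'ap tree) (snd (\<rho>' w))) (snd (\<rho>' w) = []))"
        using fp loc(1) uv u_def by simp
    qed
  next
    show "\<forall>\<pi>'. \<pi>' 0 = [] \<and> (\<forall>n. \<pi>' (Suc n) \<in> children R' (\<pi>' n)) \<longrightarrow>
        (\<exists>\<^sub>\<infinity>n. fst (\<rho>' (\<pi>' n)) \<in> hacc (A\<lparr>hinit := p\<rparr>))"
    proof (intro allI impI)
      fix \<pi>' assume a: "\<pi>' 0 = [] \<and> (\<forall>n. \<pi>' (Suc n) \<in> children R' (\<pi>' n))"
      have inR': "\<pi>' n \<in> R'" for n
      proof (cases n)
        case 0 then show ?thesis using a xR unfolding R'_def by auto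
      next
        case (Suc m) then show ?thesis using a unfolding children_def by auto
      qed
      define \<pi> where "\<pi> n = (if n < length x then take n x else x @ \<pi>' (n - length x))" for n
      have "\<pi> 0 = []" unfolding \<pi>_def using a by auto
      moreover have "\<pi> (Suc n) \<in> children R (\<pi> n)" for n
      proof -
        consider "Suc n < length x" | "Suc n = length x" | "Suc n > length x" by linarith
        then show ?thesis
        proof cases
          case 1
          have "take (Suc n) x \<in> R" using run_prefix[OF Rpre, of "take (Suc n) x" "drop (Suc n) x"] xR by simp
          then show ?thesis using 1 unfolding \<pi>_def children_def by (auto simp: take_Suc_conv_app_nth)
        next
          case 2
          then have xe: "take n x @ [x ! n] = x"
            by (metis lessI take_Suc_conv_app_nth take_all order_refl)
          have "\<pi> (Suc n) = x" "\<pi> n = take n x" using 2 a unfolding \<pi>_def by auto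
          then have "\<pi> (Suc n) = \<pi> n @ [x ! n]" "\<pi> (Suc n) \<in> R" using xe xR by auto
          then show ?thesis unfolding children_def by blast
        next
          case 3
          then have e: "Suc n - length x = Suc (n - length x)" by auto
          obtain i where "\<pi>' (Suc (n - length x)) = \<pi>' (n - length x) @ [i]" "\<pi>' (Suc (n - length x)) \<in> R'"
            using a unfolding children_def by blast
          then show ?thesis using 3 e nR unfolding \<pi>_def children_def by auto
        qed
      qed
      ultimately have "\<exists>\<^sub>\<infinity>n. fst (\<rho> (\<pi> n)) \<in> hacc A" using Racc by auto
      then have "\<exists>\<^sub>\<infinity>n. fst (\<rho> (\<pi> (n + length x))) \<in> hacc A" using INFM_shift[where P = "\<lambda>n. fst (\<rho> (\<pi> n)) \<in> hacc A" and c = "length x"] by simp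
      then show "\<exists>\<^sub>\<infinity>n. fst (\<rho>' (\<pi>' n)) \<in> hacc (A\<lparr>hinit := p\<rparr>)"
        unfolding \<pi>_def \<rho>'_def by simp
    qed
  qed
qed

fun asem :: "'ap hta \<Rightarrow> kd \<Rightarrow> nat hatom \<Rightarrow> bool" where
  "asem A k (Dia n q) = (\<exists>S \<subseteq> {..<kdeg k}. card S = n \<and> (\<forall>i\<in>S. Acc A q (kchild k i)))"
| "asem A k (Box n q) = (card {i. i < kdeg k \<and> \<not> Acc A q (kchild k i)} < n)"
| "asem A k (Up q) = False"

lemma glue:
  fixes A :: "'ap hta"
  assumes ow: "ow A" and qQ: "q \<in> hstates A"
    and sat: "pbf_sat (asem A k) (hdelta A q (labS (klab k)) True)"
  shows "Acc A q k"
proof -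
  define G where "G = {(q', i). i < kdeg k \<and> Acc A q' (kchild k i)}"
  define RP where "RP q' i = (SOME Rr. accepting_run (A\<lparr>hinit := q'\<rparr>) (tree_of (kchild k i) :: 'ap tree) [] (fst Rr) (snd Rr))" for q' i
  have RPok: "accepting_run (A\<lparr>hinit := q'\<rparr>) (tree_of (kchild k i) :: 'ap tree) [] (fst (RP q' i)) (snd (RP q' i))"
    if "(q', i) \<in> G" for q' i
  proof -
    have "\<exists>Rr. accepting_run (A\<lparr>hinit := q'\<rparr>) (tree_of (kchild k i) :: 'ap tree) [] (fst Rr) (snd Rr)"
      using that unfolding G_def Acc_def by auto
    then show ?thesis unfolding RP_def by (rule someI_ex)
  qed
  define dec where "dec = prod_decode"
  define rr where "rr n = fst (RP (fst (dec n)) (snd (dec n)))" for n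
  define pp where "pp n = snd (RP (fst (dec n)) (snd (dec n)))" for n
  have ppok: "accepting_run (A\<lparr>hinit := fst (dec n)\<rparr>) (tree_of (kchild k (snd (dec n))) :: 'ap tree) [] (rr n) (pp n)"
    if "dec n \<in> G" for n
    using RPok[of "fst (dec n)" "snd (dec n)"] that unfolding rr_def pp_def by simp
  have ppR: "[] \<in> rr n" "\<forall>x i. x @ [i] \<in> rr n \<longrightarrow> x \<in> rr n" "pp n [] = (fst (dec n), [])"
    "\<forall>y \<in> rr n. fst (pp n y) \<in> hstates A \<and> kvalid (kchild k (snd (dec n))) (snd (pp n y)) \<and>
        pbf_sat (sat_atom (tree_of (kchild k (snd (dec n))) :: 'ap tree) (snd (pp n y)) (pp n ` children (rr n) y))
          (hdelta A (fst (pp n y)) (tlab (tree_of (kchild k (snd (dec n))) :: 'ap tree) (snd (pp n y))) (snd (pp n y) = []))"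
    "\<forall>\<pi>. \<pi> 0 = [] \<and> (\<forall>m. \<pi> (Suc m) \<in> children (rr n) (\<pi> m)) \<longrightarrow> (\<exists>\<^sub>\<infinity>m. fst (pp n (\<pi> m)) \<in> hacc A)"
    if "dec n \<in> G" for n
    using ppok[OF that] unfolding accepting_run_def by simp_all
  have Gdec: "(q', i) \<in> G \<Longrightarrow> dec (prod_encode (q', i)) = (q', i)" for q' i
    unfolding dec_def by simp
  define R where "R = insert [] {n # w | n w. dec n \<in> G \<and> w \<in> rr n}"
  define \<rho> where "\<rho> y = (case y of [] \<Rightarrow> (q, []) | n # w \<Rightarrow> (fst (pp n w), snd (dec n) # snd (pp n w)))" for y
  have Rcons: "n # w \<in> R \<longleftrightarrow> dec n \<in> G \<and> w \<in> rr n" for n w unfolding R_def by auto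
  have Ginv: "i < kdeg k" "Acc A q' (kchild k i)" if "(q', i) \<in> G" for q' i
    using that unfolding G_def by auto
  have M0: "(q', [i]) \<in> \<rho> ` children R [] \<longleftrightarrow> (q', i) \<in> G" for q' i
  proof
    assume "(q', [i]) \<in> \<rho> ` children R []"
    then obtain y where y: "y \<in> R" "\<exists>j. y = [j]" "\<rho> y = (q', [i])" unfolding children_def by auto
    then obtain n where n: "y = [n]" by auto
    then have "dec n \<in> G" using y Rcons by auto
    then have "\<rho> y = (fst (dec n), [snd (dec n)])" using n ppR(3) unfolding \<rho>_def by simp
    then have "dec n = (q', i)" using y(3) by (simp add: prod_eq_iff)
    then show "(q', i) \<in> G" using \<open>dec n \<in> G\<close> by simp
  next
    assume a: "(q', i) \<in> G"
    define n where "n = prod_encode (q', i)"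
    have dn: "dec n = (q', i)" using Gdec[OF a] n_def by simp
    have "[n] \<in> R" using Rcons[of n "[]"] dn a ppR(1) by simp
    moreover have "\<rho> [n] = (q', [i])" using ppR(3)[of n] dn a unfolding \<rho>_def by simp
    ultimately show "(q', [i]) \<in> \<rho> ` children R []" unfolding children_def by force
  qed
  show ?thesis unfolding Acc_def accepting_run_def
  proof (intro exI[of _ R] exI[of _ \<rho>] conjI)
    show "[] \<in> R" unfolding R_def by simp
    show "\<forall>x i. x @ [i] \<in> R \<longrightarrow> x \<in> R"
    proof (intro allI impI)
      fix x i assume a: "x @ [i] \<in> R"
      show "x \<in> R"
      proof (cases x)
        case Nil then show ?thesis unfolding R_def by simp
      next
        case (Cons n w)
        then have "dec n \<in> G" "w @ [i] \<in> rr n" using a Rcons by auto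
        then show ?thesis using Cons Rcons ppR(2) by blast
      qed
    qed
    show "\<rho> [] = (hinit (A\<lparr>hinit := q\<rparr>), [])" unfolding \<rho>_def by simp
  next
    show "\<forall>x\<in>R. fst (\<rho> x) \<in> hstates (A\<lparr>hinit := q\<rparr>) \<and> snd (\<rho> x) \<in> tdom (tree_of k :: 'ap tree) \<and>
        pbf_sat (sat_atom (tree_of k :: 'ap tree) (snd (\<rho> x)) (\<rho> ` children R x))
         (hdelta (A\<lparr>hinit := q\<rparr>) (fst (\<rho> x)) (tlab (tree_of k :: 'ap tree) (snd (\<rho> x))) (snd (\<rho> x) = []))"
    proof
      fix y assume yR: "y \<in> R"
      show "fst (\<rho> y) \<in> hstates (A\<lparr>hinit := q\<rparr>) \<and> snd (\<rho> y) \<in> tdom (tree_of k :: 'ap tree) \<and>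
        pbf_sat (sat_atom (tree_of k :: 'ap tree) (snd (\<rho> y)) (\<rho> ` children R y))
         (hdelta (A\<lparr>hinit := q\<rparr>) (fst (\<rho> y)) (tlab (tree_of k :: 'ap tree) (snd (\<rho> y))) (snd (\<rho> y) = []))"
      proof (cases y)
        case Nil
        have lab: "tlab (tree_of k :: 'ap tree) [] = labS (klab k)" by (simp add: tlab_tree_of)
        have noup: "\<not> is_up a" if "a \<in> pbf_atoms (hdelta A q \<sigma> b)" for a \<sigma> b
          using ow qQ that unfolding ow_def by blast
        have ch0: "children {z. kvalid k z} [] = (\<lambda>i. [i]) ` {..<kdeg k}"
          using children_tree_of[of k "[]"] by simp
        have inj: "inj_on (\<lambda>i::nat. [i]) X" for X by (auto simp: inj_on_def)
        have "pbf_sat (sat_atom (tree_of k :: 'ap tree) [] (\<rho> ` children R [])) (hdelta A q (labS (klab k)) True)"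
        proof (rule pbf_mono[OF sat])
          fix a assume aa: "a \<in> pbf_atoms (hdelta A q (labS (klab k)) True)" and as: "asem A k a"
          show "sat_atom (tree_of k :: 'ap tree) [] (\<rho> ` children R []) a"
          proof (cases a)
            case (Dia n q')
            then obtain S where S: "S \<subseteq> {..<kdeg k}" "card S = n" "\<forall>i\<in>S. Acc A q' (kchild k i)"
              using as by auto
            have "(\<lambda>i. [i]) ` S \<subseteq> children {z. kvalid k z} []" using S(1) ch0 by auto
            moreover have "finite ((\<lambda>i. [i]) ` S)" using S(1) finite_subset by blast
            moreover have "card ((\<lambda>i. [i]) ` S) = n" using S(2) card_image[OF inj] by simp
            moreover have "\<forall>w \<in> (\<lambda>i. [i]) ` S. (q', w) \<in> \<rho> ` children R []"
              using S M0 unfolding G_def by auto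
            ultimately show ?thesis using Dia by (auto intro!: exI[of _ "(\<lambda>i. [i]) ` S"])
          next
            case (Box n q')
            have "{w \<in> children {z. kvalid k z} []. (q', w) \<notin> \<rho> ` children R []} =
                (\<lambda>i. [i]) ` {i. i < kdeg k \<and> \<not> Acc A q' (kchild k i)}"
              using M0 ch0 unfolding G_def by auto
            then show ?thesis using Box as card_image[OF inj] by simp
          next
            case (Up q')
            then show ?thesis using noup[OF aa] by simp
          qed
        qed
        then show ?thesis using Nil qQ lab unfolding \<rho>_def by simp
      next
        case (Cons n w)
        then have dG: "dec n \<in> G" and wr: "w \<in> rr n" using yR Rcons by auto
        define i where "i = snd (dec n)"
        define p1 where "p1 = fst (pp n w)"
        define u where "u = snd (pp n w)"
        have ik: "i < kdeg k" using Ginv(1)[of "fst (dec n)" "snd (dec n)"] dG i_def by simp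
        have loc: "p1 \<in> hstates A" "kvalid (kchild k i) u"
          "pbf_sat (sat_atom (tree_of (kchild k i) :: 'ap tree) u (pp n ` children (rr n) w))
            (hdelta A p1 (tlab (tree_of (kchild k i) :: 'ap tree) u) (u = []))"
          using ppR(4)[OF dG] wr unfolding p1_def u_def i_def by auto
        have ry: "\<rho> y = (p1, [i] @ u)" unfolding \<rho>_def Cons p1_def u_def i_def by simp
        have vi: "kvalid k [i]" using ik by simp
        have kv: "kvalid k ([i] @ u)" using ik loc(2) by simp
        have lab: "tlab (tree_of k :: 'ap tree) ([i] @ u) = tlab (tree_of (kchild k i) :: 'ap tree) u"
          using tlab_tree_of_shift[OF kv] by simp
        have flag: "hdelta A p1 \<sigma> b = hdelta A p1 \<sigma> b'" for \<sigma> b b'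
          using ow loc(1) unfolding ow_def by (metis (full_types))
        have noup: "\<not> is_up a" if "a \<in> pbf_atoms (hdelta A p1 \<sigma> b)" for a \<sigma> b
          using ow loc(1) that unfolding ow_def by blast
        have MM: "(q', [i] @ z) \<in> \<rho> ` children R y \<longleftrightarrow> (q', z) \<in> pp n ` children (rr n) w" for q' z
        proof
          assume "(q', [i] @ z) \<in> \<rho> ` children R y"
          then obtain j where j: "n # w @ [j] \<in> R" "\<rho> (n # w @ [j]) = (q', i # z)"
            unfolding children_def Cons by auto
          then have "w @ [j] \<in> rr n" using Rcons by auto
          moreover have "pp n (w @ [j]) = (q', z)" using j(2) unfolding \<rho>_def i_def
            by (simp add: prod_eq_iff)
          ultimately show "(q', z) \<in> pp n ` children (rr n) w" unfolding children_def by force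
        next
          assume "(q', z) \<in> pp n ` children (rr n) w"
          then obtain j where j: "w @ [j] \<in> rr n" "pp n (w @ [j]) = (q', z)"
            unfolding children_def by auto
          then have "n # w @ [j] \<in> R" using Rcons dG by auto
          moreover have "\<rho> (n # w @ [j]) = (q', [i] @ z)" using j(2) unfolding \<rho>_def i_def by simp
          ultimately show "(q', [i] @ z) \<in> \<rho> ` children R y" unfolding children_def Cons
            by (intro image_eqI[of _ _ "n # w @ [j]"]) auto
        qed
        have "pbf_sat (sat_atom (tree_of k :: 'ap tree) ([i] @ u) (\<rho> ` children R y))
            (hdelta A p1 (tlab (tree_of k :: 'ap tree) ([i] @ u)) ([i] @ u = []))"
        proof (rule pbf_mono)
          show "pbf_sat (sat_atom (tree_of (kchild k i) :: 'ap tree) u (pp n ` children (rr n) w))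
            (hdelta A p1 (tlab (tree_of k :: 'ap tree) ([i] @ u)) ([i] @ u = []))"
            using loc(3) lab flag by metis
        next
          fix a assume "a \<in> pbf_atoms (hdelta A p1 (tlab (tree_of k :: 'ap tree) ([i] @ u)) ([i] @ u = []))"
            "sat_atom (tree_of (kchild k i) :: 'ap tree) u (pp n ` children (rr n) w) a"
          then show "sat_atom (tree_of k :: 'ap tree) ([i] @ u) (\<rho> ` children R y) a"
            using sat_shift[OF vi noup, of a _ _ u "\<rho> ` children R y" "pp n ` children (rr n) w"] MM by (simp (no_asm_use)) blast
        qed
        then show ?thesis using ry loc(1) kv by simp
      qed
    qed
  next
    show "\<forall>\<pi>. \<pi> 0 = [] \<and> (\<forall>n. \<pi> (Suc n) \<in> children R (\<pi> n)) \<longrightarrow>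
        (\<exists>\<^sub>\<infinity>n. fst (\<rho> (\<pi> n)) \<in> hacc (A\<lparr>hinit := q\<rparr>))"
    proof (intro allI impI)
      fix \<pi> assume a: "\<pi> 0 = [] \<and> (\<forall>n. \<pi> (Suc n) \<in> children R (\<pi> n))"
      have "\<pi> (Suc 0) \<in> children R []" using a by metis
      then obtain n where n1: "\<pi> 1 = [n]" "[n] \<in> R" unfolding children_def by auto
      have dG: "dec n \<in> G" using n1 Rcons by auto
      have hd: "\<exists>w. \<pi> (Suc m) = n # w" for m
      proof (induction m)
        case 0 then show ?case using n1 by auto
      next
        case (Suc m)
        then obtain w where "\<pi> (Suc m) = n # w" by auto
        moreover obtain j where "\<pi> (Suc (Suc m)) = \<pi> (Suc m) @ [j]" using a unfolding children_def by blast
        ultimately show ?case by auto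
      qed
      define \<pi>' where "\<pi>' m = tl (\<pi> (Suc m))" for m
      have pe: "\<pi> (Suc m) = n # \<pi>' m" for m using hd[of m] unfolding \<pi>'_def by auto
      have "\<pi>' 0 = []" unfolding \<pi>'_def using n1 by simp
      moreover have "\<pi>' (Suc m) \<in> children (rr n) (\<pi>' m)" for m
      proof -
        obtain j where j: "\<pi> (Suc (Suc m)) = \<pi> (Suc m) @ [j]" "\<pi> (Suc (Suc m)) \<in> R"
          using a unfolding children_def by blast
        then have "\<pi>' (Suc m) = \<pi>' m @ [j]" using pe[of m] pe[of "Suc m"] by simp
        moreover have "\<pi>' (Suc m) \<in> rr n" using j(2) pe[of "Suc m"] Rcons by simp
        ultimately show ?thesis unfolding children_def by auto
      qed
      ultimately have "\<exists>\<^sub>\<infinity>m. fst (pp n (\<pi>' m)) \<in> hacc A" using ppR(5)[OF dG] by blast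
      then have "\<exists>\<^sub>\<infinity>m. fst (\<rho> (\<pi> (m + 1))) \<in> hacc A" using pe unfolding \<rho>_def by simp
      then have "\<exists>\<^sub>\<infinity>m. fst (\<rho> (\<pi> m)) \<in> hacc A"
        using INFM_shift[where P = "\<lambda>m. fst (\<rho> (\<pi> m)) \<in> hacc A" and c = 1] by simp
      then show "\<exists>\<^sub>\<infinity>m. fst (\<rho> (\<pi> m)) \<in> hacc (A\<lparr>hinit := q\<rparr>)" by simp
    qed
  qed
qed

lemma acc_unfold:
  fixes A :: "'ap hta"
  assumes ow: "ow A"
  shows "Acc A q k \<longleftrightarrow> q \<in> hstates A \<and> pbf_sat (asem A k) (hdelta A q (labS (klab k)) True)"
proof
  assume "Acc A q k"
  then obtain R \<rho> where run: "accepting_run (A\<lparr>hinit := q\<rparr>) (tree_of k :: 'ap tree) [] R \<rho>"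
    unfolding Acc_def by blast
  have R0: "[] \<in> R" "\<rho> [] = (q, [])" and
    Rloc: "\<forall>y \<in> R. fst (\<rho> y) \<in> hstates A \<and> snd (\<rho> y) \<in> tdom (tree_of k :: 'ap tree) \<and>
        pbf_sat (sat_atom (tree_of k :: 'ap tree) (snd (\<rho> y)) (\<rho> ` children R y))
          (hdelta A (fst (\<rho> y)) (tlab (tree_of k :: 'ap tree) (snd (\<rho> y))) (snd (\<rho> y) = []))"
    using run unfolding accepting_run_def by (simp_all del: tdom_tree_of)
  have "fst (\<rho> []) \<in> hstates A \<and>
        pbf_sat (sat_atom (tree_of k :: 'ap tree) (snd (\<rho> [])) (\<rho> ` children R []))
          (hdelta A (fst (\<rho> [])) (tlab (tree_of k :: 'ap tree) (snd (\<rho> []))) (snd (\<rho> []) = []))"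
    using Rloc R0(1) by blast
  then have qQ: "q \<in> hstates A" and
    loc: "pbf_sat (sat_atom (tree_of k :: 'ap tree) [] (\<rho> ` children R [])) (hdelta A q (tlab (tree_of k :: 'ap tree) []) True)"
    using R0(2) by simp_all
  have lab: "tlab (tree_of k :: 'ap tree) [] = labS (klab k)" by (simp add: tlab_tree_of)
  have ch0: "children {z. kvalid k z} [] = (\<lambda>i. [i]) ` {..<kdeg k}"
    using children_tree_of[of k "[]"] by simp
  have inj: "inj_on (\<lambda>i::nat. [i]) X" for X by (auto simp: inj_on_def)
  have noup: "\<not> is_up a" if "a \<in> pbf_atoms (hdelta A q \<sigma> b)" for a \<sigma> b
    using ow qQ that unfolding ow_def by blast
  have key: "Acc A q' (kchild k i)" if "(q', [i]) \<in> \<rho> ` children R []" for q' i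
  proof -
    from that obtain y where y: "y \<in> children R []" "(q', [i]) = \<rho> y" by blast
    then have "y \<in> R" "\<rho> y = (q', [i])" unfolding children_def by auto
    then have "Acc A q' (kat k [i])" using sub_run[OF ow run] by blast
    then show ?thesis by simp
  qed
  have "pbf_sat (asem A k) (hdelta A q (labS (klab k)) True)"
  proof (rule pbf_mono)
    show "pbf_sat (sat_atom (tree_of k :: 'ap tree) [] (\<rho> ` children R [])) (hdelta A q (labS (klab k)) True)"
      using loc lab by simp
  next
    fix a assume aa: "a \<in> pbf_atoms (hdelta A q (labS (klab k)) True)"
      and sa: "sat_atom (tree_of k :: 'ap tree) [] (\<rho> ` children R []) a"
    show "asem A k a"
    proof (cases a)
      case (Dia n q')
      then obtain S where S: "S \<subseteq> (\<lambda>i. [i]) ` {..<kdeg k}" "finite S" "card S = n"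
          "\<forall>w\<in>S. (q', w) \<in> \<rho> ` children R []"
        using sa ch0 by auto
      then obtain S' where S': "S' \<subseteq> {..<kdeg k}" "S = (\<lambda>i. [i]) ` S'" by (auto simp: subset_image_iff)
      have "card S' = n" using S(3) S'(2) card_image[OF inj] by simp
      moreover have "\<forall>i\<in>S'. Acc A q' (kchild k i)" using S(4) S'(2) key by auto
      ultimately show ?thesis using Dia S'(1) by auto
    next
      case (Box n q')
      have "{i. i < kdeg k \<and> \<not> Acc A q' (kchild k i)} \<subseteq> {i. i < kdeg k \<and> (q', [i]) \<notin> \<rho> ` children R []}"
        using key by auto
      then have "card {i. i < kdeg k \<and> \<not> Acc A q' (kchild k i)} \<le> card {i. i < kdeg k \<and> (q', [i]) \<notin> \<rho> ` children R []}"
        by (intro card_mono) auto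
      moreover have "{w \<in> children {z. kvalid k z} []. (q', w) \<notin> \<rho> ` children R []} =
          (\<lambda>i. [i]) ` {i. i < kdeg k \<and> (q', [i]) \<notin> \<rho> ` children R []}"
        using ch0 by auto
      ultimately show ?thesis using Box sa card_image[OF inj] by simp
    next
      case (Up q')
      then show ?thesis using noup[OF aa] by simp
    qed
  qed
  then show "q \<in> hstates A \<and> pbf_sat (asem A k) (hdelta A q (labS (klab k)) True)" using qQ by simp
next
  assume "q \<in> hstates A \<and> pbf_sat (asem A k) (hdelta A q (labS (klab k)) True)"
  then show "Acc A q k" using glue[OF ow] by blast
qed

lemma lang_tree_of:
  fixes A :: "'ap hta"
  shows "(tree_of k :: 'ap tree) \<in> lang A \<longleftrightarrow> Acc A (hinit A) k"
  unfolding lang_def Acc_def by (simp add: is_tree_tree_of)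

lemma mono_form: "(H s False \<Longrightarrow> H s True) \<Longrightarrow> H s b = (H s False \<or> H s True \<and> b)"
  by (cases b) auto

lemma mono_idem: "(K False \<Longrightarrow> K True) \<Longrightarrow> K (K b) = K b"
  by (cases b; cases "K False"; cases "K True") auto

lemma dyn_ex:
  fixes e :: "bool \<Rightarrow> bool \<Rightarrow> nat \<Rightarrow> bool" and H :: "bool \<Rightarrow> bool \<Rightarrow> bool"
  assumes mono: "\<And>s. H s False \<Longrightarrow> H s True"
    and eq: "\<And>x s j. g \<le> j \<Longrightarrow> e x s (Suc j) = H s (e x (\<not> s) j \<or> e False (\<not> s) j \<or> e True s j \<or> e False s j)"
  shows "\<forall>j \<ge> g + 4. \<forall>y s. e y s j = e True s (g + 4)"
proof -
  have eq': "e x s (Suc j) = (H s False \<or> H s True \<and> (e x (\<not> s) j \<or> e False (\<not> s) j \<or> e True s j \<or> e False s j))"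
    if "g \<le> j" for x s j
  proof -
    have "e x s (Suc j) = H s (e x (\<not> s) j \<or> e False (\<not> s) j \<or> e True s j \<or> e False s j)" by (rule eq[OF that])
    also have "\<dots> = (H s False \<or> H s True \<and> (e x (\<not> s) j \<or> e False (\<not> s) j \<or> e True s j \<or> e False s j))"
      by (rule mono_form[of H s, OF mono])
    finally show ?thesis .
  qed
  have sym: "e True s j = e False s j" if "g + 2 \<le> j" for s j
  proof -
    define j0 where "j0 = j - 2"
    have jj: "j = Suc (Suc j0)" and j0: "g \<le> j0" and j1: "g \<le> Suc j0" using that unfolding j0_def by auto
    note E = eq'[OF j1, of True True] eq'[OF j1, of True False] eq'[OF j1, of False True] eq'[OF j1, of False False]
       eq'[OF j0, of True True] eq'[OF j0, of True False] eq'[OF j0, of False True] eq'[OF j0, of False False]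
    show ?thesis unfolding jj using E mono[of True] mono[of False] apply (cases s) apply simp_all apply argo+ done
  qed
  define w where "w j = (e True False j \<or> e True True j)" for j
  define K where "K b = (H False b \<or> H True b)" for b
  have Km: "K False \<Longrightarrow> K True" unfolding K_def using mono by blast
  have wrec: "w (Suc j) = K (w j)" if "g + 2 \<le> j" for j
  proof -
    have j: "g \<le> j" using that by simp
    show ?thesis
      using eq[OF j, of True False] eq[OF j, of True True] sym[OF that, of True] sym[OF that, of False]
      unfolding w_def K_def by (simp add: disj_commute disj_left_commute)
  qed
  have wc: "w j = w (g + 3)" if "g + 3 \<le> j" for j
    using that
  proof (induction j rule: dec_induct)
    case base then show ?case by simp
  next
    case (step n)
    define n0 where "n0 = n - 1"
    have nn: "n = Suc n0" and n0: "g + 2 \<le> n0" using step(1) unfolding n0_def by auto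
    have "w (Suc n) = K (w n)" using wrec step(1) by simp
    also have "w n = K (w n0)" using wrec[OF n0] nn by simp
    finally have "w (Suc n) = w n" using mono_idem[of K, OF Km] \<open>w n = K (w n0)\<close> by simp
    then show ?case using step(3) by simp
  qed
  have "e y s j = H s (w (g + 3))" if "g + 4 \<le> j" for y s j
  proof -
    define j0 where "j0 = j - 1"
    have jj: "j = Suc j0" and j0: "g + 3 \<le> j0" using that unfolding j0_def by auto
    have "e y s j = H s (e y (\<not> s) j0 \<or> e False (\<not> s) j0 \<or> e True s j0 \<or> e False s j0)" using eq j0 jj by simp
    also have "\<dots> = H s (w j0)" using sym[of j0 True] sym[of j0 False] j0 unfolding w_def by (cases y; cases s) auto
    finally show ?thesis using wc[OF j0] by simp
  qed
  then show ?thesis by auto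
qed

lemma dyn_all:
  fixes e :: "bool \<Rightarrow> bool \<Rightarrow> nat \<Rightarrow> bool" and H :: "bool \<Rightarrow> bool \<Rightarrow> bool"
  assumes mono: "\<And>s. H s False \<Longrightarrow> H s True"
    and eq: "\<And>x s j. g \<le> j \<Longrightarrow> e x s (Suc j) = H s (e x (\<not> s) j \<and> e False (\<not> s) j \<and> e True s j \<and> e False s j)"
  shows "\<forall>j \<ge> g + 4. \<forall>y s. e y s j = e True s (g + 4)"
proof -
  have eq': "e x s (Suc j) = (H s False \<or> H s True \<and> (e x (\<not> s) j \<and> e False (\<not> s) j \<and> e True s j \<and> e False s j))"
    if "g \<le> j" for x s j
  proof -
    have "e x s (Suc j) = H s (e x (\<not> s) j \<and> e False (\<not> s) j \<and> e True s j \<and> e False s j)" by (rule eq[OF that])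
    also have "\<dots> = (H s False \<or> H s True \<and> (e x (\<not> s) j \<and> e False (\<not> s) j \<and> e True s j \<and> e False s j))"
      by (rule mono_form[of H s, OF mono])
    finally show ?thesis .
  qed
  have sym: "e True s j = e False s j" if "g + 2 \<le> j" for s j
  proof -
    define j0 where "j0 = j - 2"
    have jj: "j = Suc (Suc j0)" and j0: "g \<le> j0" and j1: "g \<le> Suc j0" using that unfolding j0_def by auto
    note E = eq'[OF j1, of True True] eq'[OF j1, of True False] eq'[OF j1, of False True] eq'[OF j1, of False False]
       eq'[OF j0, of True True] eq'[OF j0, of True False] eq'[OF j0, of False True] eq'[OF j0, of False False]
    show ?thesis unfolding jj using E mono[of True] mono[of False] apply (cases s) apply simp_all apply argo+ done
  qed
  define w where "w j = (e True False j \<and> e True True j)" for j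
  define K where "K b = (H False b \<and> H True b)" for b
  have Km: "K False \<Longrightarrow> K True" unfolding K_def using mono by blast
  have wrec: "w (Suc j) = K (w j)" if "g + 2 \<le> j" for j
  proof -
    have j: "g \<le> j" using that by simp
    show ?thesis
      using eq[OF j, of True False] eq[OF j, of True True] sym[OF that, of True] sym[OF that, of False]
      unfolding w_def K_def by (simp add: conj_commute conj_left_commute)
  qed
  have wc: "w j = w (g + 3)" if "g + 3 \<le> j" for j
    using that
  proof (induction j rule: dec_induct)
    case base then show ?case by simp
  next
    case (step n)
    define n0 where "n0 = n - 1"
    have nn: "n = Suc n0" and n0: "g + 2 \<le> n0" using step(1) unfolding n0_def by auto
    have "w (Suc n) = K (w n)" using wrec step(1) by simp
    also have "w n = K (w n0)" using wrec[OF n0] nn by simp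
    finally have "w (Suc n) = w n" using mono_idem[of K, OF Km] \<open>w n = K (w n0)\<close> by simp
    then show ?case using step(3) by simp
  qed
  have "e y s j = H s (w (g + 3))" if "g + 4 \<le> j" for y s j
  proof -
    define j0 where "j0 = j - 1"
    have jj: "j = Suc j0" and j0: "g + 3 \<le> j0" using that unfolding j0_def by auto
    have "e y s j = H s (e y (\<not> s) j0 \<and> e False (\<not> s) j0 \<and> e True s j0 \<and> e False s j0)" using eq j0 jj by simp
    also have "\<dots> = H s (w j0)" using sym[of j0 True] sym[of j0 False] j0 unfolding w_def by (cases y; cases s) auto
    finally show ?thesis using wc[OF j0] by simp
  qed
  then show ?thesis by auto
qed

definition stable :: "'ap hta \<Rightarrow> nat \<Rightarrow> nat \<Rightarrow> bool" where
  "stable A q g \<longleftrightarrow> (\<forall>j \<ge> g. \<forall>y s. Acc A q (Mid y s j) = Acc A q (Mid True s g))"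

lemma stable_mono:
  assumes "stable A q g" "g \<le> g'"
  shows "stable A q g'"
  unfolding stable_def
proof (intro allI impI)
  fix j y s assume j: "g' \<le> j"
  have h: "\<forall>j \<ge> g. \<forall>y s. Acc A q (Mid y s j) = Acc A q (Mid True s g)" using assms(1) unfolding stable_def .
  have e1: "Acc A q (Mid y s j) = Acc A q (Mid True s g)" using h[rule_format, of j y s] j assms(2) by linarith
  have e2: "Acc A q (Mid True s g') = Acc A q (Mid True s g)" using h[rule_format, of g' True s] assms(2) by linarith
  show "Acc A q (Mid y s j) = Acc A q (Mid True s g')" unfolding e1 e2 ..
qed

lemma asem_eq:
  assumes "kdeg k1 = kdeg k2" "\<forall>i<kdeg k1. Acc A (atom_state a) (kchild k1 i) = Acc A (atom_state a) (kchild k2 i)"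
  shows "asem A k1 a = asem A k2 a"
proof (cases a)
  case (Dia n q)
  have "S \<subseteq> {..<kdeg k1} \<Longrightarrow> (\<forall>i\<in>S. Acc A q (kchild k1 i)) = (\<forall>i\<in>S. Acc A q (kchild k2 i))" for S
    using assms Dia by auto
  then show ?thesis using Dia assms(1) by auto
next
  case (Box n q)
  have "{i. i < kdeg k1 \<and> \<not> Acc A q (kchild k1 i)} = {i. i < kdeg k2 \<and> \<not> Acc A q (kchild k2 i)}"
    using assms Box by auto
  then show ?thesis using Box by simp
next
  case (Up q) then show ?thesis by simp
qed

lemma asem_dia1: "asem A k (Dia 1 q) = (\<exists>i<kdeg k. Acc A q (kchild k i))"
  by (auto simp: card_1_singleton_iff)

lemma asem_box1: "asem A k (Box 1 q) = (\<forall>i<kdeg k. Acc A q (kchild k i))"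
proof -
  have "finite {i. i < kdeg k \<and> \<not> Acc A q (kchild k i)}" by simp
  then show ?thesis by (auto simp: card_eq_0_iff)
qed

lemma lt4: "(i::nat) < 4 \<longleftrightarrow> i = 0 \<or> i = 1 \<or> i = 2 \<or> i = 3"
  by auto

lemma ex4: "(\<exists>i<(4::nat). P i) = (P 0 \<or> P 1 \<or> P 2 \<or> P 3)"
  unfolding lt4 by blast

lemma all4: "(\<forall>i<(4::nat). P i) = (P 0 \<and> P 1 \<and> P 2 \<and> P 3)"
  unfolding lt4 by blast

lemma kdeg_Suc[simp]: "kdeg (Mid y s (Suc j)) = 4" by simp

lemma kchild_lev: "kchild (Mid y s (Suc j)) i = Mid (if i = 0 then y else if i = 2 then True else False) (if i = 0 \<or> i = 1 then \<not> s else s) j"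
  by simp

lemma one_way_ow: "one_way_linear A \<Longrightarrow> ow A"
  unfolding one_way_linear_def ow_def by blast

lemma stable_all:
  fixes A :: "'ap hta"
  assumes owl: "one_way_linear A"
  shows "q \<in> hstates A \<Longrightarrow> \<exists>g. stable A q g"
proof -
  have ow: "ow A" using one_way_ow[OF owl] .
  have wf: "hta_wf A" and lo: "linear_order_ok A"
    and ty: "\<forall>q \<in> hstates A. transient_st A q \<or> (existential_st A q \<and> q \<notin> hacc A) \<or>
        (universal_st A q \<and> q \<in> hacc A)"
    using owl unfolding one_way_linear_def by auto
  obtain rk :: "nat \<Rightarrow> nat" where rki: "inj_on rk (hstates A)"
    and rkle: "\<forall>q \<in> hstates A. \<forall>\<sigma> b. \<forall>a \<in> pbf_atoms (hdelta A q \<sigma> b). rk (atom_state a) \<le> rk q"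
    using lo unfolding linear_order_ok_def by blast
  have finQ: "finite (hstates A)" and stQ: "\<forall>q \<in> hstates A. \<forall>\<sigma> b. atom_state ` pbf_atoms (hdelta A q \<sigma> b) \<subseteq> hstates A"
    using wf unfolding hta_wf_def by auto
  show "q \<in> hstates A \<Longrightarrow> \<exists>g. stable A q g"
  proof (induction "rk q" arbitrary: q rule: less_induct)
    case (less q)
    note qQ = less.prems
    define Lw where "Lw = {q' \<in> hstates A. rk q' < rk q}"
    have finL: "finite Lw" using finQ unfolding Lw_def by simp
    have "\<forall>q'\<in>Lw. \<exists>g. stable A q' g" using less.hyps unfolding Lw_def by blast
    then obtain f where f: "\<forall>q'\<in>Lw. stable A q' (f q')" by (metis bchoice)
    define G0 where "G0 = sum f Lw"
    have stL: "stable A q' G0" if "q' \<in> Lw" for q'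
      using stable_mono[of A q' "f q'" G0] f that member_le_sum[of q' Lw f] finL unfolding G0_def by auto
    have low: "atom_state a \<in> Lw" if "a \<in> pbf_atoms (hdelta A q \<sigma> b)" "atom_state a \<noteq> q" for a \<sigma> b
    proof -
      have aQ: "atom_state a \<in> hstates A" using stQ qQ that(1) by blast
      have "rk (atom_state a) \<le> rk q" using rkle qQ that(1) by blast
      moreover have "rk (atom_state a) \<noteq> rk q" using rki aQ qQ that(2) unfolding inj_on_def by blast
      ultimately show ?thesis unfolding Lw_def using aQ by simp
    qed
    have lowasem: "asem A (Mid y s (Suc j)) a = asem A (Mid True s (Suc G0)) a"
      if "a \<in> pbf_atoms (hdelta A q \<sigma> b)" "atom_state a \<noteq> q" "G0 \<le> j" for a \<sigma> b y s j
    proof (rule asem_eq)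
      show "kdeg (Mid y s (Suc j)) = kdeg (Mid True s (Suc G0))" by simp
      have st: "stable A (atom_state a) G0" by (rule stL[OF low[OF that(1,2)]])
      show "\<forall>i<kdeg (Mid y s (Suc j)). Acc A (atom_state a) (kchild (Mid y s (Suc j)) i) =
          Acc A (atom_state a) (kchild (Mid True s (Suc G0)) i)"
      proof (intro allI impI)
        fix i
        have e1: "Acc A (atom_state a) (Mid y' s' j) = Acc A (atom_state a) (Mid True s' G0)" for y' s'
          using st that(3) unfolding stable_def by blast
        have e2: "Acc A (atom_state a) (Mid y' s' G0) = Acc A (atom_state a) (Mid True s' G0)" for y' s'
          using st unfolding stable_def by blast
        obtain y1 y2 s1 where k1: "kchild (Mid y s (Suc j)) i = Mid y1 s1 j"
          and k2: "kchild (Mid True s (Suc G0)) i = Mid y2 s1 G0"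
          by (rule that[OF kchild_lev kchild_lev])
        have "Acc A (atom_state a) (kchild (Mid y s (Suc j)) i) = Acc A (atom_state a) (Mid y1 s1 j)"
          by (simp only: k1)
        also have "\<dots> = Acc A (atom_state a) (Mid True s1 G0)" by (rule e1)
        also have "\<dots> = Acc A (atom_state a) (Mid y2 s1 G0)" by (rule e2[symmetric])
        also have "\<dots> = Acc A (atom_state a) (kchild (Mid True s (Suc G0)) i)" by (simp only: k2)
        finally show "Acc A (atom_state a) (kchild (Mid y s (Suc j)) i) = Acc A (atom_state a) (kchild (Mid True s (Suc G0)) i)" .
      qed
    qed
    have accEq: "Acc A q (Mid y s (Suc j)) = pbf_sat (asem A (Mid y s (Suc j))) (hdelta A q (labS s) True)" for y s j
      using acc_unfold[OF ow, of q "Mid y s (Suc j)"] qQ by simp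
    consider (tr) "transient_st A q" | (ex) "existential_st A q" | (un) "universal_st A q"
      using ty qQ by blast
    then show ?case
    proof cases
      case tr
      have noq: "atom_state a \<noteq> q" if "a \<in> pbf_atoms (hdelta A q \<sigma> b)" for a \<sigma> b
        using tr that unfolding transient_st_def occ_def by blast
      define C where "C s = pbf_sat (asem A (Mid True s (Suc G0))) (hdelta A q (labS s) True)" for s
      have cst: "Acc A q (Mid y s (Suc j)) = C s" if "G0 \<le> j" for y s j
        unfolding accEq C_def using lowasem[OF _ noq that] by (intro pbf_cong) blast
      have "stable A q (Suc G0)" unfolding stable_def
      proof (intro allI impI)
        fix j y s assume "Suc G0 \<le> j"
        then obtain j' where "j = Suc j'" "G0 \<le> j'" by (cases j) auto
        then show "Acc A q (Mid y s j) = Acc A q (Mid True s (Suc G0))" using cst by simp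
      qed
      then show ?thesis by blast
    next
      case ex
      have qa: "a = Dia 1 q" if "a \<in> pbf_atoms (hdelta A q \<sigma> b)" "atom_state a = q" for a \<sigma> b
        using ex that unfolding existential_st_def occ_def by blast
      define H where "H s b = pbf_sat (\<lambda>a. if atom_state a = q then b else asem A (Mid True s (Suc G0)) a) (hdelta A q (labS s) True)" for s b
      define e where "e x s j = Acc A q (Mid x s j)" for x s j
      have mono: "H s False \<Longrightarrow> H s True" for s
        unfolding H_def by (erule pbf_mono) (auto split: if_splits)
      have eq: "e x s (Suc j) = H s (e x (\<not> s) j \<or> e False (\<not> s) j \<or> e True s j \<or> e False s j)" if "G0 \<le> j" for x s j
      proof -
        have "e x s (Suc j) = pbf_sat (asem A (Mid x s (Suc j))) (hdelta A q (labS s) True)"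
          unfolding e_def accEq ..
        also have "\<dots> = H s (asem A (Mid x s (Suc j)) (Dia 1 q))"
          unfolding H_def
        proof (rule pbf_cong)
          fix a assume a: "a \<in> pbf_atoms (hdelta A q (labS s) True)"
          show "asem A (Mid x s (Suc j)) a = (if atom_state a = q then asem A (Mid x s (Suc j)) (Dia 1 q) else asem A (Mid True s (Suc G0)) a)"
          proof (cases "atom_state a = q")
            case True then show ?thesis using qa[OF a] by simp
          next
            case False then show ?thesis using lowasem[OF a False that] by simp
          qed
        qed
        also have "asem A (Mid x s (Suc j)) (Dia 1 q) = (e x (\<not> s) j \<or> e False (\<not> s) j \<or> e True s j \<or> e False s j)"
          unfolding asem_dia1 kdeg_Suc ex4 e_def by simp
        finally show ?thesis .
      qed
      have "\<forall>j \<ge> G0 + 4. \<forall>y s. e y s j = e True s (G0 + 4)"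
        by (rule dyn_ex[where H=H and e=e and g=G0]) (rule mono, assumption, rule eq, assumption)
      then have "stable A q (G0 + 4)" unfolding stable_def e_def by blast
      then show ?thesis by blast
    next
      case un
      have qa: "a = Box 1 q" if "a \<in> pbf_atoms (hdelta A q \<sigma> b)" "atom_state a = q" for a \<sigma> b
        using un that unfolding universal_st_def occ_def by blast
      define H where "H s b = pbf_sat (\<lambda>a. if atom_state a = q then b else asem A (Mid True s (Suc G0)) a) (hdelta A q (labS s) True)" for s b
      define e where "e x s j = Acc A q (Mid x s j)" for x s j
      have mono: "H s False \<Longrightarrow> H s True" for s
        unfolding H_def by (erule pbf_mono) (auto split: if_splits)
      have eq: "e x s (Suc j) = H s (e x (\<not> s) j \<and> e False (\<not> s) j \<and> e True s j \<and> e False s j)" if "G0 \<le> j" for x s j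
      proof -
        have "e x s (Suc j) = pbf_sat (asem A (Mid x s (Suc j))) (hdelta A q (labS s) True)"
          unfolding e_def accEq ..
        also have "\<dots> = H s (asem A (Mid x s (Suc j)) (Box 1 q))"
          unfolding H_def
        proof (rule pbf_cong)
          fix a assume a: "a \<in> pbf_atoms (hdelta A q (labS s) True)"
          show "asem A (Mid x s (Suc j)) a = (if atom_state a = q then asem A (Mid x s (Suc j)) (Box 1 q) else asem A (Mid True s (Suc G0)) a)"
          proof (cases "atom_state a = q")
            case True then show ?thesis using qa[OF a] by simp
          next
            case False then show ?thesis using lowasem[OF a False that] by simp
          qed
        qed
        also have "asem A (Mid x s (Suc j)) (Box 1 q) = (e x (\<not> s) j \<and> e False (\<not> s) j \<and> e True s j \<and> e False s j)"
          unfolding asem_box1 kdeg_Suc all4 e_def by simp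
        finally show ?thesis .
      qed
      have "\<forall>j \<ge> G0 + 4. \<forall>y s. e y s j = e True s (G0 + 4)"
        by (rule dyn_all[where H=H and e=e and g=G0]) (rule mono, assumption, rule eq, assumption)
      then have "stable A q (G0 + 4)" unfolding stable_def e_def by blast
      then show ?thesis by blast
    qed
  qed
qed

definition Bdelta :: "nat \<Rightarrow> 'ap set \<Rightarrow> bool \<Rightarrow> nat hatom pbf" where
  "Bdelta q \<sigma> r = (if q = 0 then PTrue
     else if q = 1 then (if \<sigma> = {} then PTrue else PFalse)
     else if q = 2 then (if \<sigma> = {} then PFalse else PTrue)
     else if q = 3 then (if r then POr (PAtom (Dia 5 0)) (PAtom (Dia 1 3))
          else PAnd (PAtom (Up (if \<sigma> = {} then 2 else 1))) (POr (PAtom (Dia 5 0)) (PAtom (Dia 1 3))))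
     else PFalse)"

definition Bhta :: "'ap hta" where
  "Bhta = \<lparr>hstates = {0, 1, 2, 3}, hdelta = Bdelta, hinit = 3, hacc = {}\<rparr>"

lemma Bhta_simps[simp]: "hstates Bhta = {0,1,2,3}" "hdelta Bhta = Bdelta" "hinit Bhta = 3" "hacc Bhta = {}"
  by (simp_all add: Bhta_def)

lemma B_atoms: "pbf_atoms (Bdelta q \<sigma> r) \<subseteq> {Dia 5 0, Dia 1 3, Up 1, Up 2}"
  unfolding Bdelta_def by auto

lemma two_way_B: "two_way_linear (Bhta :: 'ap hta)"
proof -
  have wf: "hta_wf (Bhta :: 'ap hta)"
    unfolding hta_wf_def using B_atoms by fastforce
  have lo: "linear_order_ok (Bhta :: 'ap hta)"
    unfolding linear_order_ok_def
  proof (intro exI[of _ id] conjI ballI allI)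
    show "inj_on id (hstates (Bhta :: 'ap hta))" by simp
  next
    fix q \<sigma> b a assume q: "q \<in> hstates (Bhta :: 'ap hta)" and a: "a \<in> pbf_atoms (hdelta (Bhta :: 'ap hta) q \<sigma> b)"
    then show "id (atom_state a) \<le> id q" by (auto simp: Bdelta_def split: if_splits)
  qed
  have tr: "transient_st (Bhta :: 'ap hta) q" if "q \<in> {0, 1, 2}" for q
    using that unfolding transient_st_def occ_def by (auto simp: Bdelta_def)
  have ex: "existential_st (Bhta :: 'ap hta) 3"
    unfolding existential_st_def occ_def by (auto simp: Bdelta_def)
  show ?thesis unfolding two_way_linear_def using wf lo tr ex by auto
qed

lemma one_two: "one_way_linear A \<Longrightarrow> two_way_linear A"
  unfolding one_way_linear_def two_way_linear_def by blast

lemma labS_inj: "labS a = labS b \<Longrightarrow> a = b"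
  unfolding labS_def by (auto split: if_splits)

lemma labS_empty: "labS a = {} \<longleftrightarrow> \<not> a"
  unfolding labS_def by auto

lemma run_facts:
  fixes A :: "'ap hta"
  assumes "accepting_run A (tree_of k :: 'ap tree) [] R \<rho>" "x \<in> R"
  shows "fst (\<rho> x) \<in> hstates A" "kvalid k (snd (\<rho> x))"
    "pbf_sat (sat_atom (tree_of k :: 'ap tree) (snd (\<rho> x)) (\<rho> ` children R x))
          (hdelta A (fst (\<rho> x)) (tlab (tree_of k :: 'ap tree) (snd (\<rho> x))) (snd (\<rho> x) = []))"
  using assms unfolding accepting_run_def by auto

lemma B_step:
  assumes run: "accepting_run (Bhta :: 'ap hta) (tree_of k :: 'ap tree) [] R \<rho>" and xR: "x \<in> R"
    and xr: "\<rho> x = (3, v)" and deg: "kdeg (kat k v) \<le> 4"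
  shows "\<exists>x' i. x' \<in> R \<and> \<rho> x' = (3, v @ [i]) \<and> i < kdeg (kat k v) \<and> klab (kchild (kat k v) i) \<noteq> klab (kat k v)"
proof -
  note F = run_facts[OF run xR]
  have vv: "kvalid k v" using F(2) xr by simp
  have lab: "tlab (tree_of k :: 'ap tree) v = labS (klab (kat k v))" using tlab_tree_of[OF vv] .
  define M where "M = \<rho> ` children R x"
  have sat: "pbf_sat (sat_atom (tree_of k :: 'ap tree) v M) (Bdelta 3 (labS (klab (kat k v)) :: 'ap set) (v = []))"
    using F(3) xr lab unfolding M_def by simp
  then have "sat_atom (tree_of k :: 'ap tree) v M (Dia 5 0) \<or> sat_atom (tree_of k :: 'ap tree) v M (Dia 1 3)"
    unfolding Bdelta_def by (cases "v = []") auto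
  moreover have "\<not> sat_atom (tree_of k :: 'ap tree) v M (Dia 5 0)"
  proof
    assume "sat_atom (tree_of k :: 'ap tree) v M (Dia 5 0)"
    then obtain S where S: "S \<subseteq> (\<lambda>i. v @ [i]) ` {..<kdeg (kat k v)}" "finite S" "card S = 5"
      using children_tree_of[OF vv] by auto
    have "card S \<le> card ((\<lambda>i. v @ [i]) ` {..<kdeg (kat k v)})" using S(1) by (intro card_mono) auto
    also have "\<dots> \<le> card {..<kdeg (kat k v)}" by (rule card_image_le) simp
    finally show False using S(3) deg by simp
  qed
  ultimately have "sat_atom (tree_of k :: 'ap tree) v M (Dia 1 3)" by blast
  then obtain w where w: "w \<in> children {z. kvalid k z} v" "(3, w) \<in> M"
    by (auto simp: card_1_singleton_iff)
  then obtain i where wi: "w = v @ [i]" "i < kdeg (kat k v)" using children_tree_of[OF vv] by auto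
  obtain x' where x': "x' \<in> R" "\<rho> x' = (3, w)" using w(2) unfolding M_def children_def by auto
  note F' = run_facts[OF run x'(1)]
  have wv: "kvalid k w" using F'(2) x' by simp
  have labw: "tlab (tree_of k :: 'ap tree) w = labS (klab (kat k w))" using tlab_tree_of[OF wv] .
  define c where "c = (if labS (klab (kat k w)) = ({} :: 'ap set) then 2 else (1::nat))"
  have "pbf_sat (sat_atom (tree_of k :: 'ap tree) w (\<rho> ` children R x')) (Bdelta 3 (labS (klab (kat k w)) :: 'ap set) False)"
    using F'(3) x' labw wi by simp
  then have "sat_atom (tree_of k :: 'ap tree) w (\<rho> ` children R x') (Up c)"
    unfolding Bdelta_def c_def by simp
  then obtain x'' where x'': "x'' \<in> R" "\<rho> x'' = (c, v)" using wi unfolding children_def by auto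
  note F'' = run_facts[OF run x''(1)]
  have "pbf_sat (sat_atom (tree_of k :: 'ap tree) v (\<rho> ` children R x'')) (Bdelta c (labS (klab (kat k v)) :: 'ap set) (v = []))"
    using F''(3) x'' lab by simp
  then have "labS (klab (kat k w)) = ({} :: 'ap set) \<longleftrightarrow> labS (klab (kat k v)) \<noteq> ({} :: 'ap set)"
    unfolding Bdelta_def c_def by (auto split: if_splits)
  then have "klab (kat k w) \<noteq> klab (kat k v)" unfolding labS_empty by auto
  moreover have "kat k w = kchild (kat k v) i" using wi by (simp add: kat_append)
  ultimately have "klab (kchild (kat k v) i) \<noteq> klab (kat k v)" by simp
  moreover have "\<rho> x' = (3, v @ [i])" using x'(2) wi(1) by simp
  ultimately show ?thesis using x'(1) wi(2) by blast
qed

lemma B_N: "(tree_of (Mid False False n) :: 'ap tree) \<notin> lang (Bhta :: 'ap hta)"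
proof
  assume "(tree_of (Mid False False n) :: 'ap tree) \<in> lang (Bhta :: 'ap hta)"
  then obtain R \<rho> where run: "accepting_run (Bhta :: 'ap hta) (tree_of (Mid False False n) :: 'ap tree) [] R \<rho>"
    unfolding lang_def by blast
  have claim: "\<forall>s x v. x \<in> R \<longrightarrow> \<rho> x = (3, v) \<longrightarrow> kat (Mid False False n) v = Mid False s j \<longrightarrow> False" for j
  proof (induction j)
    case 0
    show ?case
    proof (intro allI impI)
      fix s x v assume a: "x \<in> R" "\<rho> x = (3, v)" "kat (Mid False False n) v = Mid False s 0"
      obtain x' i where "x' \<in> R" "\<rho> x' = (3, v @ [i])" "i < kdeg (kat (Mid False False n) v)"
        "klab (kchild (kat (Mid False False n) v) i) \<noteq> klab (kat (Mid False False n) v)"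
        using B_step[OF run a(1,2)] a(3) by auto
      then show False using a(3) by simp
    qed
  next
    case (Suc j)
    show ?case
    proof (intro allI impI)
      fix s x v assume a: "x \<in> R" "\<rho> x = (3, v)" "kat (Mid False False n) v = Mid False s (Suc j)"
      obtain x' i where x': "x' \<in> R" "\<rho> x' = (3, v @ [i])" "i < kdeg (kat (Mid False False n) v)"
        "klab (kchild (kat (Mid False False n) v) i) \<noteq> klab (kat (Mid False False n) v)"
        using B_step[OF run a(1,2)] a(3) by auto
      then have "kat (Mid False False n) (v @ [i]) = Mid False (\<not> s) j"
        using a(3) by (auto simp: kat_append split: if_splits)
      then show False using Suc.IH x'(1,2) by blast
    qed
  qed
  have "[] \<in> R" "\<rho> [] = (3, [])" using run unfolding accepting_run_def by auto
  then show False using claim[of n, rule_format, where s=False and x="[]" and v="[]"] by simp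
qed

lemma rep_snoc: "replicate (Suc m) a = replicate m a @ [a]"
  by (induction m) auto

lemma snoc_rep: "x @ [i] = replicate m a \<Longrightarrow> x = replicate (m - 1) a \<and> i = a \<and> m \<noteq> 0"
proof (cases m)
  case 0
  then show "x @ [i] = replicate m a \<Longrightarrow> ?thesis" by simp
next
  case (Suc m')
  show "x @ [i] = replicate m a \<Longrightarrow> ?thesis"
  proof -
    assume h: "x @ [i] = replicate m a"
    have "x @ [i] = replicate m' a @ [a]" using h unfolding Suc rep_snoc .
    then show ?thesis using Suc by simp
  qed
qed

lemma kat_rep: "m \<le> j \<Longrightarrow> kat (Mid True s j) (replicate m 0) = Mid True (if even m then s else \<not> s) (j - m)
    \<and> kvalid (Mid True s j) (replicate m 0)"
proof (induction m arbitrary: s j)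
  case 0 then show ?case by simp
next
  case (Suc m)
  then obtain j' where j: "j = Suc j'" "m \<le> j'" by (cases j) auto
  have "kat (Mid True (\<not> s) j') (replicate m 0) = Mid True (if even m then \<not> s else \<not> \<not> s) (j' - m)
    \<and> kvalid (Mid True (\<not> s) j') (replicate m 0)" using Suc.IH[OF j(2)] .
  then show ?case using j by simp
qed

lemma B_P:
  fixes n :: nat
  shows "(tree_of (Mid True False n) :: 'ap tree) \<in> lang (Bhta :: 'ap hta)"
proof -
  define K0 where "K0 = Mid True False n"
  define T where "T = (tree_of K0 :: 'ap tree)"
  define R where "R = {replicate m (0::nat) | m. m \<le> n} \<union> {replicate m 0 @ [1] | m. 1 \<le> m \<and> m \<le> n}
      \<union> {replicate n 0 @ [Suc (Suc i)] | i. i < 5}"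
  define \<rho> where "\<rho> y = (if set y \<subseteq> {0} then (3::nat, y)
      else if last y = 1 then (if even (length y - 1) then 2 else 1, replicate (length y - 2) 0)
      else (0, replicate n 0 @ [last y - 2]))" for y :: "nat list"
  have katm: "kat K0 (replicate m 0) = Mid True (odd m) (n - m)" "kvalid K0 (replicate m 0)" if "m \<le> n" for m
    using kat_rep[OF that, of False] unfolding K0_def by auto
  have labm: "tlab T (replicate m 0) = labS (odd m)" if "m \<le> n" for m
    using tlab_tree_of[OF katm(2)[OF that]] katm(1)[OF that] unfolding T_def by simp
  have rho_path: "\<rho> (replicate m 0) = (3, replicate m 0)" for m unfolding \<rho>_def by auto
  have rho_chk: "\<rho> (replicate m 0 @ [1]) = (if even m then 2 else 1, replicate (m - 1) 0)" for m
    unfolding \<rho>_def by auto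
  have rho_z: "\<rho> (replicate n 0 @ [Suc (Suc i)]) = (0, replicate n 0 @ [i])" for i
    unfolding \<rho>_def by auto
  have lenR: "length y \<le> Suc n" if "y \<in> R" for y using that unfolding R_def by auto
  have ch: "y @ [i] \<in> children R y" if "y @ [i] \<in> R" for y i using that unfolding children_def by auto
  have run: "accepting_run (Bhta :: 'ap hta) T [] R \<rho>"
    unfolding accepting_run_def
  proof (intro conjI)
    show "[] \<in> R" unfolding R_def by auto
    show "\<forall>x i. x @ [i] \<in> R \<longrightarrow> x \<in> R"
    proof (intro allI impI)
      fix x i assume "x @ [i] \<in> R"
      then consider (a) m where "x @ [i] = replicate m 0" "m \<le> n"
        | (b) m where "x @ [i] = replicate m 0 @ [1]" "1 \<le> m" "m \<le> n"
        | (c) i' where "x @ [i] = replicate n 0 @ [Suc (Suc i')]" "i' < 5"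
        unfolding R_def by blast
      then show "x \<in> R"
      proof cases
        case a then show ?thesis using snoc_rep[OF a(1)] unfolding R_def by auto
      next
        case b then show ?thesis unfolding R_def by auto
      next
        case c then show ?thesis unfolding R_def by auto
      qed
    qed
    show "\<rho> [] = (hinit (Bhta :: 'ap hta), [])" unfolding \<rho>_def by simp
  next
    show "\<forall>y\<in>R. fst (\<rho> y) \<in> hstates (Bhta :: 'ap hta) \<and> snd (\<rho> y) \<in> tdom T \<and>
        pbf_sat (sat_atom T (snd (\<rho> y)) (\<rho> ` children R y))
         (hdelta (Bhta :: 'ap hta) (fst (\<rho> y)) (tlab T (snd (\<rho> y))) (snd (\<rho> y) = []))"
    proof
      fix y assume "y \<in> R"
      then consider (a) m where "y = replicate m 0" "m \<le> n"
        | (b) m where "y = replicate m 0 @ [1]" "1 \<le> m" "m \<le> n"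
        | (c) i where "y = replicate n 0 @ [Suc (Suc i)]" "i < 5"
        unfolding R_def by blast
      then show "fst (\<rho> y) \<in> hstates (Bhta :: 'ap hta) \<and> snd (\<rho> y) \<in> tdom T \<and>
        pbf_sat (sat_atom T (snd (\<rho> y)) (\<rho> ` children R y))
         (hdelta (Bhta :: 'ap hta) (fst (\<rho> y)) (tlab T (snd (\<rho> y))) (snd (\<rho> y) = []))"
      proof cases
        case a
        define M where "M = \<rho> ` children R y"
        have chy: "children {z. kvalid K0 z} y = (\<lambda>i. y @ [i]) ` {..<kdeg (kat K0 y)}"
          using children_tree_of[OF katm(2)[OF a(2)]] a(1) by simp
        have D5: "sat_atom T y M (Dia 5 0)" if "m = n"
        proof -
          have kd: "kdeg (kat K0 y) = 5" using katm(1)[OF a(2)] a(1) that by simp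
          let ?S = "(\<lambda>i. y @ [i]) ` {..<5::nat}"
          have "?S \<subseteq> children {z. kvalid K0 z} y" using chy kd by simp
          moreover have "card ?S = 5" by (subst card_image) (auto simp: inj_on_def)
          moreover have "\<forall>w\<in>?S. (0, w) \<in> M"
          proof
            fix w assume "w \<in> ?S"
            then obtain i where i: "w = y @ [i]" "i < 5" by auto
            have r1: "y @ [Suc (Suc i)] \<in> R" unfolding R_def using a that i by blast
            have r2: "\<rho> (y @ [Suc (Suc i)]) = (0, w)" using rho_z a that i by simp
            show "(0, w) \<in> M" unfolding M_def by (rule image_eqI[where f=\<rho>, OF r2[symmetric] ch[OF r1]])
          qed
          ultimately show ?thesis unfolding T_def by (auto intro!: exI[of _ ?S])
        qed
        have D1: "sat_atom T y M (Dia 1 3)" if "m < n"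
        proof -
          have y0: "y @ [0] = replicate (Suc m) 0" by (simp only: a(1) rep_snoc)
          have sm: "Suc m \<le> n" using that by simp
          have yv: "kvalid K0 (y @ [0])" unfolding y0 by (rule katm(2)[OF sm])
          have "replicate (Suc m) (0::nat) \<in> {replicate m (0::nat) | m. m \<le> n}" using sm by blast
          then have "replicate (Suc m) (0::nat) \<in> R" unfolding R_def by (intro UnI1)
          then have r1: "y @ [0] \<in> R" by (simp only: y0)
          have r2: "\<rho> (y @ [0]) = (3, y @ [0])" by (simp only: y0 rho_path)
          have "(3, y @ [0]) \<in> M" unfolding M_def by (rule image_eqI[where f=\<rho>, OF r2[symmetric] ch[OF r1]])
          moreover have "y @ [0] \<in> children {z. kvalid K0 z} y" using yv unfolding children_def by auto
          ultimately show ?thesis unfolding T_def by (auto intro!: exI[of _ "{y @ [0]}"])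
        qed
        have U: "sat_atom T y M (Up (if (labS (odd m) :: 'ap set) = {} then 2 else 1))" if "1 \<le> m"
        proof -
          have r1: "y @ [1] \<in> R" unfolding R_def using a that by blast
          have r2: "\<rho> (y @ [1]) = (if even m then 2 else 1, butlast y)"
            using rho_chk a by (simp add: butlast_conv_take)
          have "(if even m then 2 else 1, butlast y) \<in> M" unfolding M_def by (rule image_eqI[where f=\<rho>, OF r2[symmetric] ch[OF r1]])
          moreover have "y \<noteq> []" using a that by simp
          ultimately show ?thesis by (simp add: labS_empty)
        qed
        have lab: "tlab T y = labS (odd m)" using labm a by simp
        have sat: "pbf_sat (sat_atom T y M) (Bdelta 3 (labS (odd m) :: 'ap set) (y = []))"
        proof (cases "m = 0")
          case True
          then have "y = []" using a by simp
          then show ?thesis using D5 D1 True a(2) unfolding Bdelta_def by (cases "m = n") auto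
        next
          case False
          then have "y \<noteq> []" using a by simp
          then show ?thesis using D5 D1 U False a(2) unfolding Bdelta_def
            by (cases "m = n") (auto simp del: sat_atom.simps)
        qed
        show ?thesis using sat lab rho_path a katm(2)[OF a(2)] unfolding M_def T_def by simp
      next
        case b
        have e: "\<rho> y = (if even m then 2 else 1, replicate (m - 1) 0)" using rho_chk b by simp
        have lab: "tlab T (replicate (m - 1) 0) = labS (odd (m - 1))" using labm b by simp
        have "pbf_sat I (Bdelta (if even m then 2 else 1) (labS (odd (m - 1)) :: 'ap set) b')" for I b'
          using b(2) unfolding Bdelta_def labS_def by auto
        then show ?thesis using e lab katm(2)[of "m - 1"] b unfolding T_def by simp
      next
        case c
        have e: "\<rho> y = (0, replicate n 0 @ [i])" using rho_z c by simp
        have "kvalid K0 (replicate n 0 @ [i])" using katm[of n] c(2) by (simp add: kvalid_snoc)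
        then show ?thesis using e unfolding T_def by (simp add: Bdelta_def)
      qed
    qed
  next
    show "\<forall>\<pi>. \<pi> 0 = [] \<and> (\<forall>m. \<pi> (Suc m) \<in> children R (\<pi> m)) \<longrightarrow> (\<exists>\<^sub>\<infinity>m. fst (\<rho> (\<pi> m)) \<in> hacc (Bhta :: 'ap hta))"
    proof (intro allI impI)
      fix \<pi> assume a: "\<pi> 0 = [] \<and> (\<forall>m. \<pi> (Suc m) \<in> children R (\<pi> m))"
      have "length (\<pi> m) = m" for m
      proof (induction m)
        case 0 then show ?case using a by simp
      next
        case (Suc m)
        obtain i where "\<pi> (Suc m) = \<pi> m @ [i]" using a unfolding children_def by blast
        then show ?case using Suc by simp
      qed
      moreover have "\<pi> (Suc (Suc n)) \<in> R" using a unfolding children_def by blast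
      ultimately show "\<exists>\<^sub>\<infinity>m. fst (\<rho> (\<pi> m)) \<in> hacc (Bhta :: 'ap hta)" using lenR by fastforce
    qed
  qed
  then show ?thesis unfolding lang_def T_def K0_def using is_tree_tree_of by blast
qed

theorem corollary5p6:
  shows "(\<forall>A :: ('ap::finite) hta. one_way_linear A \<longrightarrow>
            (\<exists>B :: 'ap hta. two_way_linear B \<and> lang B = lang A)) \<and>
         (\<exists>B :: 'ap hta. two_way_linear B \<and>
            (\<forall>A :: 'ap hta. one_way_linear A \<longrightarrow> lang A \<noteq> lang B))"
proof (intro conjI allI impI)
  fix A :: "'ap hta"
  assume "one_way_linear A"
  then show "\<exists>B :: 'ap hta. two_way_linear B \<and> lang B = lang A" using one_two by blast
next
  show "\<exists>B :: 'ap hta. two_way_linear B \<and> (\<forall>A :: 'ap hta. one_way_linear A \<longrightarrow> lang A \<noteq> lang B)"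
  proof (intro exI[of _ Bhta] conjI allI impI)
    show "two_way_linear (Bhta :: 'ap hta)" by (rule two_way_B)
  next
    fix A :: "'ap hta"
    assume owl: "one_way_linear A"
    show "lang A \<noteq> lang Bhta"
    proof
      assume eq: "lang A = lang Bhta"
      have "hinit A \<in> hstates A" using owl unfolding one_way_linear_def hta_wf_def by blast
      then obtain g where g: "stable A (hinit A) g" using stable_all[OF owl] by blast
      have "(tree_of (Mid True False g) :: 'ap tree) \<in> lang A" using eq B_P by blast
      then have "Acc A (hinit A) (Mid True False g)" using lang_tree_of by blast
      moreover have "Acc A (hinit A) (Mid False False g) = Acc A (hinit A) (Mid True False g)"
        using g unfolding stable_def by blast
      ultimately have "Acc A (hinit A) (Mid False False g)" by simp
      then have "(tree_of (Mid False False g) :: 'ap tree) \<in> lang A" using lang_tree_of by blast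
      then show False using eq B_N by blast
    qed
  qed
qed

end
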